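(* Let $r\ge1$, $\mathbf{m}=(m_1,\ldots,m_r)\in\mathbb{N}^r$, $m=m_1+\cdots+m_r$, $\mathbf{f}=(f_1,\ldots,f_r)\in\mathbb{C}^r$ and $a,b,c\in\mathbb{C}$ be such that $(c-b-m)_{m}\neq0$. Then for all $x\in\mathbb{C}\setminus[1,\infty)$, $$ {}_{r+2}F_{r+1}\!\left(\begin{matrix}a,b,\mathbf{f}+\mathbf{m}\\ c,\mathbf{f}\end{matrix}\,\middle|\, x\right) =(1-x)^{-a}\,{}_{m+2}F_{m+1}\!\left(\begin{matrix}a,c-b-m,\boldsymbol{\zeta}+1\\ c,\boldsymbol{\zeta}\end{matrix}\,\middle|\, \frac{x}{x-1}\right), $$ where $\boldsymbol{\zeta}=(\zeta_1,\ldots,\zeta_m)$ are the roots of the polynomial $$ P_m(x)=\frac{1}{(c-b-m)_m}\sum_{k=0}^m(b)_{k}(1-c+b)_{k}D_{k}\,(c-b-m-x)_{m-k}, $$ with $D_k=\sum_{j=k}^m\alpha_j\mathbf{S}_j^{(k)}=\frac{(-1)^k(\mathbf{f}-b)_{\mathbf{m}}}{k!}{}_{r+1}F_{r}\!\left(\begin{matrix}-k,1-\mathbf{f}+b\\1-\mathbf{f}+b-\mathbf{m}\end{matrix}\right)$, where $(\mathbf{f}-b-t)_{\mathbf{m}}=\sum_{j=0}^m\alpha_jt^j$.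
   Context: $(a)_k=\Gamma(a+k)/\Gamma(a)$. For vectors: $(\mathbf{f})_{\mathbf{m}}=\prod_i(f_i)_{m_i}$, $\mathbf{f}+\alpha$, $\mathbf{f}+\mathbf{m}$ componentwise; a vector among hypergeometric parameters means its components are listed. ${}_pF_q(\mathbf{a};\mathbf{b};x)$ is the generalized hypergeometric function (principal branch, analytically continued to $\mathbb{C}\setminus[1,\infty)$ when $p=q+1$), and ${}_pF_q(\mathbf{a};\mathbf{b})$ denotes its value at $1$. $(1-x)^{-a}$ is the principal branch. $\mathbf{S}_j^{(k)}$ are Stirling numbers of the second kind. The roots are listed with multiplicity. *)

theory Defs
  imports "HOL-Complex_Analysis.Complex_Analysis" "HOL-Combinatorics.Stirling"
    "HOL-Computational_Algebra.Polynomial"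
begin

definition hyp_coeff :: "complex list \<Rightarrow> complex list \<Rightarrow> nat \<Rightarrow> complex" where
  "hyp_coeff as bs n =
     (\<Prod>a\<leftarrow>as. pochhammer a n) / ((\<Prod>b\<leftarrow>bs. pochhammer b n) * fact n)"

definition hyp_series :: "complex list \<Rightarrow> complex list \<Rightarrow> complex \<Rightarrow> complex" where
  "hyp_series as bs x = (\<Sum>n. hyp_coeff as bs n * x ^ n)"

definition cut_plane :: "complex set" where
  "cut_plane = - (complex_of_real ` {1..})"

text \<open>Principal branch of pFq for p = q+1: the holomorphic function on the cut plane
  agreeing with the power series on the open unit disc (unique by the identity theorem).\<close>
definition hypF :: "complex list \<Rightarrow> complex list \<Rightarrow> complex \<Rightarrow> complex" where
  "hypF as bs =
     (if \<exists>g. g holomorphic_on cut_plane \<and> (\<forall>z. norm z < 1 \<longrightarrow> g z = hyp_series as bs z)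
      then (SOME g. g holomorphic_on cut_plane \<and> (\<forall>z. norm z < 1 \<longrightarrow> g z = hyp_series as bs z))
      else hyp_series as bs)"

text \<open>Polynomial in t: (u - t)_k = prod_{l<k} (u + l - t).\<close>
definition poch_poly :: "complex \<Rightarrow> nat \<Rightarrow> complex poly" where
  "poch_poly u k = (\<Prod>l<k. [:u + of_nat l, -1:])"

definition alpha_coef :: "complex list \<Rightarrow> nat list \<Rightarrow> complex \<Rightarrow> nat \<Rightarrow> complex" where
  "alpha_coef fs ms b j = coeff (\<Prod>i<length fs. poch_poly (fs ! i - b) (ms ! i)) j"

definition D_coef :: "complex list \<Rightarrow> nat list \<Rightarrow> complex \<Rightarrow> nat \<Rightarrow> complex" where
  "D_coef fs ms b k = (\<Sum>j=k..sum_list ms. alpha_coef fs ms b j * of_nat (Stirling j k))"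

definition P_poly :: "complex list \<Rightarrow> nat list \<Rightarrow> complex \<Rightarrow> complex \<Rightarrow> complex poly" where
  "P_poly fs ms b c =
     (let m = sum_list ms in
      smult (1 / pochhammer (c - b - of_nat m) m)
        (\<Sum>k=0..m. smult (pochhammer b k * pochhammer (1 - c + b) k * D_coef fs ms b k)
                          (poch_poly (c - b - of_nat m) (m - k))))"

end

theory Submission
  imports Defs
begin

lemma cut_plane_alt: "cut_plane = {z. Im z \<noteq> 0 \<or> Re z < 1}"
proof -
  have "complex_of_real ` {1..} = {z. Im z = 0 \<and> Re z \<ge> 1}"
    by (auto simp: image_iff complex_eq_iff intro!: exI[of _ "Re _"])
  thus ?thesis unfolding cut_plane_def by auto
qed

lemma mem_cut_plane: "z \<in> cut_plane \<longleftrightarrow> Im z \<noteq> 0 \<or> Re z < 1"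
  by (simp add: cut_plane_alt)

lemma open_cut_plane: "open cut_plane"
proof -
  have "cut_plane = {z. Im z \<noteq> 0} \<union> {z. Re z < 1}" by (auto simp: cut_plane_alt)
  moreover have "open {z::complex. Im z \<noteq> 0}"
    by (intro open_Collect_neq continuous_intros)
  moreover have "open {z::complex. Re z < 1}"
    by (intro open_Collect_less continuous_intros)
  ultimately show ?thesis by (metis open_Un)
qed

lemma ball_subset_cut_plane: "ball 0 1 \<subseteq> cut_plane"
proof
  fix z :: complex assume "z \<in> ball 0 1"
  hence "norm z < 1" by simp
  moreover have "\<bar>Re z\<bar> \<le> norm z" by (rule abs_Re_le_cmod)
  ultimately show "z \<in> cut_plane" by (auto simp: mem_cut_plane)
qed

lemma cut_plane_segment:
  assumes "x \<in> cut_plane" "u \<ge> 0" "u \<le> (1::real)"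
  shows "of_real u * x \<in> cut_plane"
proof (cases "Im x = 0")
  case True
  with assms have "Re x < 1" by (auto simp: mem_cut_plane)
  have "u * Re x < 1"
  proof (cases "Re x \<ge> 0")
    case True
    hence "u * Re x \<le> 1 * Re x" using assms by (intro mult_right_mono) auto
    thus ?thesis using \<open>Re x < 1\<close> by simp
  next
    case False
    hence "u * Re x \<le> 0" using assms by (intro mult_nonneg_nonpos) auto
    thus ?thesis by simp
  qed
  thus ?thesis by (simp add: mem_cut_plane)
next
  case False
  show ?thesis
  proof (cases "u = 0")
    case True thus ?thesis by (simp add: mem_cut_plane)
  next
    case False
    with \<open>Im x \<noteq> 0\<close> show ?thesis by (simp add: mem_cut_plane)
  qed
qed

lemma connected_cut_plane: "connected cut_plane"
proof (rule starlike_imp_connected)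
  show "starlike cut_plane" unfolding starlike_def
  proof (intro bexI ballI)
    show "0 \<in> cut_plane" by (simp add: mem_cut_plane)
    fix x assume x: "x \<in> cut_plane"
    show "closed_segment 0 x \<subseteq> cut_plane"
    proof
      fix y assume "y \<in> closed_segment 0 x"
      then obtain u where u: "0 \<le> u" "u \<le> 1" "y = (1 - u) *\<^sub>R 0 + u *\<^sub>R x"
        unfolding closed_segment_def by auto
      hence "y = of_real u * x" by (simp add: scaleR_conv_of_real)
      thus "y \<in> cut_plane" using cut_plane_segment[OF x u(1,2)] by simp
    qed
  qed
qed

definition Cont :: "complex list \<Rightarrow> complex list \<Rightarrow> (complex \<Rightarrow> complex) \<Rightarrow> bool" where
  "Cont as bs g \<longleftrightarrow> g holomorphic_on cut_plane \<and> (\<forall>z. norm z < 1 \<longrightarrow> g z = hyp_series as bs z)"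

lemma hypF_eqI:
  assumes "Cont as bs g" "x \<in> cut_plane"
  shows "hypF as bs x = g x"
proof -
  let ?P = "\<lambda>g. g holomorphic_on cut_plane \<and> (\<forall>z. norm z < 1 \<longrightarrow> g z = hyp_series as bs z)"
  have ex: "\<exists>g. ?P g" using assms(1) unfolding Cont_def by blast
  hence h: "hypF as bs = (SOME g. ?P g)" unfolding hypF_def by simp
  have P: "?P (SOME g. ?P g)" using someI_ex[OF ex] .
  show ?thesis unfolding h
  proof (rule analytic_continuation_open[of "ball 0 1" cut_plane "SOME g. ?P g" g])
    show "(SOME g. ?P g) holomorphic_on cut_plane" using P by blast
    show "g holomorphic_on cut_plane" using assms(1) by (simp add: Cont_def)
    show "(SOME g. ?P g) z = g z" if "z \<in> ball 0 1" for z
      using P assms(1) that by (auto simp: Cont_def)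
  qed (use assms(2) open_cut_plane connected_cut_plane ball_subset_cut_plane in auto)
qed

lemma hypF_Cont:
  assumes "Cont as bs g"
  shows "Cont as bs (hypF as bs)"
proof -
  have "hypF as bs holomorphic_on cut_plane"
    using assms unfolding Cont_def
    by (rule conjE, subst holomorphic_cong[OF refl, of _ _ g]) (auto simp: hypF_eqI[OF assms])
  moreover have "norm z < 1 \<Longrightarrow> hypF as bs z = hyp_series as bs z" for z
    using hypF_eqI[OF assms, of z] assms ball_subset_cut_plane by (auto simp: Cont_def)
  ultimately show ?thesis by (simp add: Cont_def)
qed

definition f2 :: "complex \<Rightarrow> complex \<Rightarrow> complex \<Rightarrow> nat \<Rightarrow> complex" where
  "f2 a b c n = pochhammer a n * pochhammer b n / (pochhammer c n * fact n)"

lemma hyp_coeff_2: "hyp_coeff [a, b] [c] n = f2 a b c n"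
  by (simp add: hyp_coeff_def f2_def)

lemma f2_Suc: "f2 a b c (Suc n) = f2 a b c n * ((a + of_nat n) * (b + of_nat n) / ((c + of_nat n) * (of_nat n + 1)))"
  by (simp add: f2_def pochhammer_rec' field_simps)

lemma ratio_lim:
  fixes a b c :: complex
  shows "(\<lambda>n. (a + of_nat n) * (b + of_nat n) / ((c + of_nat n) * (of_nat n + 1))) \<longlonglongrightarrow> 1"
proof -
  have inf1: "filterlim (\<lambda>n. c + of_nat n :: complex) at_infinity sequentially"
    by (intro tendsto_add_filterlim_at_infinity[OF tendsto_const] tendsto_of_nat)
  have inf2: "filterlim (\<lambda>n. of_nat n + 1 :: complex) at_infinity sequentially"
    by (intro tendsto_add_filterlim_at_infinity'[OF tendsto_of_nat tendsto_const])
  have l1: "(\<lambda>n. 1 + (a - 1) / (of_nat n + 1)) \<longlonglongrightarrow> (1 + 0 :: complex)"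
    by (intro tendsto_add tendsto_const tendsto_divide_0[OF tendsto_const inf2])
  have l2: "(\<lambda>n. 1 + (b - c) / (c + of_nat n)) \<longlonglongrightarrow> (1 + 0 :: complex)"
    by (intro tendsto_add tendsto_const tendsto_divide_0[OF tendsto_const inf1])
  have "(\<lambda>n. (1 + (a - 1) / (of_nat n + 1)) * (1 + (b - c) / (c + of_nat n))) \<longlonglongrightarrow> (1 + 0) * (1 + 0 :: complex)"
    by (intro tendsto_mult l1 l2)
  moreover have "eventually (\<lambda>n. (1 + (a - 1) / (of_nat n + 1)) * (1 + (b - c) / (c + of_nat n)) =
      (a + of_nat n) * (b + of_nat n) / ((c + of_nat n) * (of_nat n + 1))) sequentially"
  proof -
    obtain N :: nat where N: "real N > norm c" using reals_Archimedean2 by blast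
    show ?thesis
    proof (rule eventually_sequentiallyI[of N])
      fix n assume "n \<ge> N"
      hence "c + of_nat n \<noteq> 0"
      proof -
        assume "n \<ge> N"
        have "norm (of_nat n :: complex) = real n" by simp
        hence "norm (of_nat n :: complex) > norm c" using N \<open>n \<ge> N\<close> by linarith
        thus ?thesis by (metis add.inverse_unique add.commute norm_minus_cancel order_less_irrefl)
      qed
      moreover have "(of_nat n + 1 :: complex) \<noteq> 0"
        by (metis of_nat_Suc of_nat_eq_0_iff add.commute nat.distinct(1))
      ultimately show "(1 + (a - 1) / (of_nat n + 1)) * (1 + (b - c) / (c + of_nat n)) =
        (a + of_nat n) * (b + of_nat n) / ((c + of_nat n) * (of_nat n + 1))"
        by (simp add: field_simps)
    qed
  qed
  ultimately show ?thesis by (simp add: tendsto_cong)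
qed

lemma f2_abs_summable:
  assumes "norm (z::complex) < 1"
  shows "summable (\<lambda>n. norm (f2 a b c n * z ^ n))"
proof (cases "z = 0")
  case True
  thus ?thesis using summable_0_powser[of "\<lambda>n. norm (f2 a b c n)"] by (simp add: norm_mult norm_power)
next
  case False
  define q where "q = (1 + norm z) / 2"
  have q: "q < 1" "norm z < q" using assms by (auto simp: q_def)
  have "eventually (\<lambda>n. dist ((a + of_nat n) * (b + of_nat n) / ((c + of_nat n) * (of_nat n + 1))) 1 < q / norm z - 1) sequentially"
  proof -
    have "q / norm z - 1 > 0" using q False by (simp add: field_simps)
    from tendsto_iff[THEN iffD1, rule_format, OF ratio_lim this] show ?thesis .
  qed
  then obtain N where N: "\<And>n. n \<ge> N \<Longrightarrow> dist ((a + of_nat n) * (b + of_nat n) / ((c + of_nat n) * (of_nat n + 1))) 1 < q / norm z - 1"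
    by (auto simp: eventually_sequentially)
  show ?thesis
  proof (rule summable_ratio_test[OF q(1), of N])
    fix n assume "N \<le> n"
    define r where "r = (a + of_nat n) * (b + of_nat n) / ((c + of_nat n) * (of_nat n + 1))"
    have "norm r \<le> norm (r - 1) + 1" using norm_triangle_ineq[of "r - 1" 1] by simp
    also have "\<dots> < q / norm z" using N[OF \<open>N \<le> n\<close>] by (simp add: r_def dist_norm)
    finally have "norm r * norm z \<le> q" using False by (simp add: field_simps)
    hence "norm (f2 a b c n * z ^ n) * (norm r * norm z) \<le> norm (f2 a b c n * z ^ n) * q"
      by (intro mult_left_mono) auto
    moreover have "f2 a b c (Suc n) * z ^ Suc n = (f2 a b c n * z ^ n) * (r * z)"
      by (simp add: f2_Suc r_def)
    hence "norm (f2 a b c (Suc n) * z ^ Suc n) = norm (f2 a b c n * z ^ n) * (norm r * norm z)"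
      by (simp only: norm_mult)
    ultimately show "norm (norm (f2 a b c (Suc n) * z ^ Suc n)) \<le> q * norm (norm (f2 a b c n * z ^ n))"
      by (simp add: mult_ac)
  qed
qed

definition F2 :: "complex \<Rightarrow> complex \<Rightarrow> complex \<Rightarrow> complex fps" where
  "F2 a b c = Abs_fps (f2 a b c)"

lemma F2_radius: "fps_conv_radius (F2 a b c) \<ge> 1"
proof -
  have "conv_radius (f2 a b c) \<ge> 1"
  proof (rule conv_radius_geI_ex')
    fix r :: real assume "0 < r" "ereal r < 1"
    hence "norm (of_real r :: complex) < 1" by simp
    from summable_norm_cancel[OF f2_abs_summable[OF this]]
    show "summable (\<lambda>n. f2 a b c n * of_real r ^ n)" .
  qed
  thus ?thesis by (simp add: fps_conv_radius_def F2_def)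
qed

lemma F2_radius': "norm z < 1 \<Longrightarrow> ereal (norm z) < fps_conv_radius (F2 a b c)"
  using F2_radius[of a b c] by (meson ereal_less(3) less_le_trans less_ereal.simps(1))

lemma hyp_series_2: "hyp_series [a, b] [c] z = eval_fps (F2 a b c) z"
  by (simp add: hyp_series_def eval_fps_def F2_def hyp_coeff_2)

lemma Cont_deriv_eval:
  assumes "Cont [a, b] [c] G" "norm z < 1"
  shows "G z = eval_fps (F2 a b c) z" "deriv G z = eval_fps (fps_deriv (F2 a b c)) z"
proof -
  show "G z = eval_fps (F2 a b c) z" using assms by (simp add: Cont_def hyp_series_2)
  have "(G has_field_derivative eval_fps (fps_deriv (F2 a b c)) z) (at z)"
  proof (rule has_field_derivative_transform_within_open[OF has_field_derivative_eval_fps[OF F2_radius'[OF assms(2)]], of "ball 0 1"])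
    show "eval_fps (F2 a b c) x = G x" if "x \<in> ball 0 1" for x
      using assms(1) that by (simp add: Cont_def hyp_series_2)
  qed (use assms in auto)
  thus "deriv G z = eval_fps (fps_deriv (F2 a b c)) z" by (rule DERIV_imp_deriv)
qed

lemma eval_X_deriv:
  assumes "norm z < 1"
  shows "eval_fps (fps_X * fps_deriv (F2 a b c)) z = z * eval_fps (fps_deriv (F2 a b c)) z"
proof -
  have "ereal (norm z) < fps_conv_radius (fps_deriv (F2 a b c))"
    using F2_radius'[OF assms] fps_conv_radius_deriv[of "F2 a b c"] by (rule less_le_trans)
  thus ?thesis by (subst eval_fps_mult) auto
qed

lemma radius_deriv':
  assumes "norm z < 1"
  shows "ereal (norm z) < fps_conv_radius (fps_deriv (F2 a b c))"
  using F2_radius'[OF assms] fps_conv_radius_deriv[of "F2 a b c"] by (rule less_le_trans)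

lemma poch_nz: "\<forall>n::nat. c \<noteq> - of_nat n \<Longrightarrow> pochhammer (c::complex) k \<noteq> 0"
  by (auto simp: pochhammer_eq_0_iff)

lemma cplus_nz: "\<forall>n::nat. c \<noteq> - of_nat n \<Longrightarrow> (c::complex) + of_nat k \<noteq> 0"
proof
  assume "\<forall>n::nat. c \<noteq> - of_nat n" "c + of_nat k = 0"
  hence "c = - of_nat k" by (simp add: eq_neg_iff_add_eq_0)
  thus False using \<open>\<forall>n::nat. c \<noteq> - of_nat n\<close> by blast
qed

lemma f2_lower_c:
  assumes c: "\<forall>n::nat. c \<noteq> - of_nat n" and c1: "c \<noteq> 1"
  shows "f2 a b (c - 1) n = f2 a b c n * (1 + of_nat n / (c - 1))"
proof -
  have c1': "\<forall>n::nat. c - 1 \<noteq> - of_nat n"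
  proof
    fix n :: nat show "c - 1 \<noteq> - of_nat n"
    proof (cases n)
      case 0 thus ?thesis using c1 by simp
    next
      case (Suc k)
      have nz: "c + of_nat k \<noteq> 0" by (rule cplus_nz[OF c])
      have e: "c - 1 + of_nat (Suc k) = c + of_nat k" by simp
      show ?thesis
      proof
        assume "c - 1 = - of_nat n"
        hence "c - 1 + of_nat (Suc k) = 0" using Suc by simp
        with e nz show False by simp
      qed
    qed
  qed
  have e: "pochhammer (c - 1) (Suc n) = (c - 1) * pochhammer c n"
    by (simp add: pochhammer_rec)
  have e2: "pochhammer (c - 1) (Suc n) = (c - 1 + of_nat n) * pochhammer (c - 1) n"
    by (simp add: pochhammer_rec')
  have nz: "pochhammer (c - 1) n \<noteq> 0" "pochhammer c n \<noteq> 0" "c - 1 \<noteq> 0" "c - 1 + of_nat n \<noteq> 0"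
    using poch_nz[OF c1'] poch_nz[OF c] c1 cplus_nz[OF c1'] by auto
  have Qe: "pochhammer c n * (c - 1) = (c - 1 + of_nat n) * pochhammer (c - 1) n"
    using e e2 by (simp add: mult.commute)
  have o: "1 + of_nat n / (c - 1) = (c - 1 + of_nat n) / (c - 1)" using nz by (simp add: field_simps)
  have "f2 a b c n * (1 + of_nat n / (c - 1)) = pochhammer a n * pochhammer b n * (c - 1 + of_nat n) / (pochhammer c n * (c - 1) * fact n)"
    unfolding o f2_def times_divide_times_eq by (simp add: mult_ac)
  also have "\<dots> = pochhammer a n * pochhammer b n * (c - 1 + of_nat n) / ((c - 1 + of_nat n) * (pochhammer (c - 1) n * fact n))"
    by (simp only: Qe mult.assoc)
  also have "\<dots> = f2 a b (c - 1) n" using nz by (simp add: f2_def)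
  finally show ?thesis ..
qed

lemma Cont_lower_c:
  assumes G: "Cont [a, b] [c] G" and c: "\<forall>n::nat. c \<noteq> - of_nat n" and c1: "c \<noteq> 1"
  shows "Cont [a, b] [c - 1] (\<lambda>x. G x + x * deriv G x / (c - 1))"
  unfolding Cont_def
proof safe
  have hG: "G holomorphic_on cut_plane" using G by (simp add: Cont_def)
  have hd: "deriv G holomorphic_on cut_plane" by (rule holomorphic_deriv[OF hG open_cut_plane])
  have "c - 1 \<noteq> 0" using c1 by simp
  thus "(\<lambda>x. G x + x * deriv G x / (c - 1)) holomorphic_on cut_plane"
    by (intro holomorphic_on_add[OF hG] holomorphic_on_divide holomorphic_on_mult[OF holomorphic_on_ident hd] holomorphic_on_const)
next
  fix z :: complex assume z: "norm z < 1"
  define F where "F = F2 a b c"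
  have fps: "F2 a b (c - 1) = F + fps_const (1 / (c - 1)) * (fps_X * fps_deriv F)"
  proof (rule fps_ext)
    fix n
    show "F2 a b (c - 1) $ n = (F + fps_const (1 / (c - 1)) * (fps_X * fps_deriv F)) $ n"
      by (cases n) (simp_all add: F_def F2_def f2_lower_c[OF c c1] field_simps)
  qed
  have r1: "ereal (norm z) < fps_conv_radius F" unfolding F_def by (rule F2_radius'[OF z])
  have r2: "ereal (norm z) < fps_conv_radius (fps_X * fps_deriv F)"
    using fps_conv_radius_mult[of fps_X "fps_deriv F"] radius_deriv'[OF z, of a b c]
    unfolding F_def by (simp add: less_le_trans)
  have r3: "ereal (norm z) < fps_conv_radius (fps_const (1 / (c - 1)) * (fps_X * fps_deriv F))"
    using fps_conv_radius_mult[of "fps_const (1 / (c - 1))" "fps_X * fps_deriv F"] r2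
    by (simp add: less_le_trans)
  have "hyp_series [a, b] [c - 1] z = eval_fps (F2 a b (c - 1)) z" by (rule hyp_series_2)
  also have "\<dots> = eval_fps F z + eval_fps (fps_const (1 / (c - 1)) * (fps_X * fps_deriv F)) z"
    unfolding fps using r1 r3 by (rule eval_fps_add)
  also have "eval_fps (fps_const (1 / (c - 1)) * (fps_X * fps_deriv F)) z = z * eval_fps (fps_deriv F) z / (c - 1)"
    using r2 eval_X_deriv[OF z, of a b c] unfolding F_def[symmetric]
    by (subst eval_fps_mult) auto
  finally show "G z + z * deriv G z / (c - 1) = hyp_series [a, b] [c - 1] z"
    using Cont_deriv_eval[OF G z] by (simp add: F_def)
qed


lemma rad_mult: "ereal (norm z) < fps_conv_radius f \<Longrightarrow> ereal (norm z) < fps_conv_radius g \<Longrightarrow>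
  ereal (norm z) < fps_conv_radius (f * g)"
proof -
  assume "ereal (norm z) < fps_conv_radius f" "ereal (norm z) < fps_conv_radius g"
  hence "ereal (norm z) < min (fps_conv_radius f) (fps_conv_radius g)" by simp
  thus ?thesis using fps_conv_radius_mult[of f g] by (rule less_le_trans)
qed

lemma rad_add: "ereal (norm z) < fps_conv_radius f \<Longrightarrow> ereal (norm z) < fps_conv_radius g \<Longrightarrow>
  ereal (norm z) < fps_conv_radius (f + g)"
proof -
  assume "ereal (norm z) < fps_conv_radius f" "ereal (norm z) < fps_conv_radius g"
  hence "ereal (norm z) < min (fps_conv_radius f) (fps_conv_radius g)" by simp
  thus ?thesis using fps_conv_radius_add[of f g] by (rule less_le_trans)
qed

lemma rad_diff: "ereal (norm z) < fps_conv_radius f \<Longrightarrow> ereal (norm z) < fps_conv_radius g \<Longrightarrow>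
  ereal (norm z) < fps_conv_radius (f - g)"
proof -
  assume "ereal (norm z) < fps_conv_radius f" "ereal (norm z) < fps_conv_radius g"
  hence "ereal (norm z) < min (fps_conv_radius f) (fps_conv_radius g)" by simp
  thus ?thesis using fps_conv_radius_diff[of f g] by (rule less_le_trans)
qed

lemma rad_X: "ereal (norm z) < fps_conv_radius (fps_X :: complex fps)" by simp
lemma rad_const: "ereal (norm z) < fps_conv_radius (fps_const (c::complex))" by simp

lemma f2_0 [simp]: "f2 a b c 0 = 1" by (simp add: f2_def)

lemma f2_b1_Suc: "f2 a (b - 1) c (Suc k) = f2 a b c k * ((a + of_nat k) * (b - 1) / ((c + of_nat k) * (of_nat k + 1)))"
proof -
  have "f2 a (b - 1) c (Suc k) = ((a + of_nat k) * pochhammer a k) * ((b - 1) * pochhammer b k) /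
      (((c + of_nat k) * pochhammer c k) * ((of_nat k + 1) * fact k))"
    unfolding f2_def pochhammer_rec'[of a k] pochhammer_rec[of "b - 1" k] pochhammer_rec'[of c k] fact_Suc
    by (simp add: algebra_simps)
  thus ?thesis by (simp add: f2_def field_simps)
qed

lemma f2_lower_b:
  assumes c: "\<forall>n::nat. c \<noteq> - of_nat n"
  shows "(c - b) * f2 a (b - 1) c (Suc k) = (c - b + of_nat (Suc k)) * f2 a b c (Suc k) - (a + of_nat k) * f2 a b c k"
proof -
  define X where "X = f2 a b c k"
  have D: "(c + of_nat k) * (of_nat k + 1) \<noteq> 0" using cplus_nz[OF c, of k]
    by (metis mult_eq_0_iff of_nat_Suc of_nat_eq_0_iff add.commute nat.distinct(1))
  have key: "(c - b) * (b - 1) = (c - b + of_nat (Suc k)) * (b + of_nat k) - (c + of_nat k) * (of_nat k + 1)"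
    by (simp add: algebra_simps)
  have "(c - b) * f2 a (b - 1) c (Suc k) = X * (a + of_nat k) * ((c - b) * (b - 1)) / ((c + of_nat k) * (of_nat k + 1))"
    by (simp add: f2_b1_Suc X_def mult_ac)
  also have "\<dots> = X * (a + of_nat k) * ((c - b + of_nat (Suc k)) * (b + of_nat k)) / ((c + of_nat k) * (of_nat k + 1)) - X * (a + of_nat k)"
    unfolding key using D by (simp add: field_simps)
  also have "\<dots> = (c - b + of_nat (Suc k)) * f2 a b c (Suc k) - (a + of_nat k) * f2 a b c k"
    by (simp add: f2_Suc X_def mult_ac)
  finally show ?thesis .
qed

lemma Cont_lower_b:
  assumes G: "Cont [a, b] [c] G" and c: "\<forall>n::nat. c \<noteq> - of_nat n" and cb: "c \<noteq> b"
  shows "Cont [a, b - 1] [c] (\<lambda>x. ((c - b - a * x) * G x + x * (1 - x) * deriv G x) / (c - b))"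
  unfolding Cont_def
proof safe
  have hG: "G holomorphic_on cut_plane" using G by (simp add: Cont_def)
  have hd: "deriv G holomorphic_on cut_plane" by (rule holomorphic_deriv[OF hG open_cut_plane])
  have "c - b \<noteq> 0" using cb by simp
  thus "(\<lambda>x. ((c - b - a * x) * G x + x * (1 - x) * deriv G x) / (c - b)) holomorphic_on cut_plane"
    by (intro holomorphic_on_divide holomorphic_on_add holomorphic_on_mult holomorphic_on_diff
          holomorphic_on_const holomorphic_on_ident hG hd)
next
  fix z :: complex assume z: "norm z < 1"
  define F where "F = F2 a b c"
  have fps: "fps_const (c - b) * F2 a (b - 1) c = fps_const (c - b) * F - fps_const a * (fps_X * F)
      + fps_X * fps_deriv F - fps_X * (fps_X * fps_deriv F)"
  proof (rule fps_ext)
    fix n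
    show "(fps_const (c - b) * F2 a (b - 1) c) $ n = (fps_const (c - b) * F - fps_const a * (fps_X * F)
      + fps_X * fps_deriv F - fps_X * (fps_X * fps_deriv F)) $ n"
    proof (cases n)
      case 0 thus ?thesis by (simp add: F_def F2_def)
    next
      case (Suc k)
      show ?thesis
        using f2_lower_b[OF c, of b a k]
        by (cases k) (simp_all add: Suc F_def F2_def algebra_simps)
    qed
  qed
  have r: "ereal (norm z) < fps_conv_radius F" unfolding F_def by (rule F2_radius'[OF z])
  have rd: "ereal (norm z) < fps_conv_radius (fps_deriv F)" unfolding F_def by (rule radius_deriv'[OF z])
  note R = rad_mult rad_add rad_diff rad_X rad_const r rd
  have "(c - b) * hyp_series [a, b - 1] [c] z = eval_fps (fps_const (c - b) * F2 a (b - 1) c) z"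
    by (subst eval_fps_mult) (simp_all add: hyp_series_2 F2_radius'[OF z])
  also have "\<dots> = (c - b) * eval_fps F z - a * (z * eval_fps F z) + z * eval_fps (fps_deriv F) z
     - z * (z * eval_fps (fps_deriv F) z)"
    unfolding fps
    by (simp add: eval_fps_add eval_fps_diff eval_fps_mult R)
  also have "\<dots> = (c - b - a * z) * G z + z * (1 - z) * deriv G z"
    using Cont_deriv_eval[OF G z] by (simp add: F_def algebra_simps)
  finally show "((c - b - a * z) * G z + z * (1 - z) * deriv G z) / (c - b) = hyp_series [a, b - 1] [c] z"
    using cb by (simp add: field_simps)
qed

lemma xlnx_cont: "continuous_on {0..1} (\<lambda>t::real. t * ln t)"
proof -
  have lim: "((\<lambda>t::real. t * ln t) \<longlongrightarrow> 0) (at_right 0)" by real_asymp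
  show ?thesis unfolding continuous_on_def
  proof
    fix t :: real assume t: "t \<in> {0..1}"
    show "((\<lambda>t. t * ln t) \<longlongrightarrow> t * ln t) (at t within {0..1})"
    proof (cases "t = 0")
      case True
      have e: "at (0::real) within {0..1} = at_right 0"
        by (rule at_within_Icc_at_right) simp
      show ?thesis using lim unfolding True e by simp
    next
      case False
      with t have "t > 0" by auto
      hence "isCont (\<lambda>t. t * ln t) t" by (intro continuous_intros) auto
      from continuous_at_imp_continuous_at_within[OF this, of "{0..1}"]
      show ?thesis by (simp add: continuous_within)
    qed
  qed
qed

lemma holo_mellin:
  assumes g: "continuous_on {0..1} g"
  shows "(\<lambda>\<beta>. integral {0..1} (\<lambda>t. of_real t powr (\<beta> - 1) * g t)) holomorphic_on {\<beta>. Re \<beta> > 2}"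
proof -
  have "(\<lambda>\<beta>. integral (cbox 0 1) (\<lambda>t. of_real t powr (\<beta> - 1) * g t)) holomorphic_on {\<beta>. Re \<beta> > 2}"
  proof (rule leibniz_rule_holomorphic[where fx = "\<lambda>\<beta> t. of_real t powr (\<beta> - 2) * of_real (t * ln t) * g t"])
    fix \<beta> :: complex and t :: real
    assume \<beta>: "\<beta> \<in> {\<beta>. Re \<beta> > 2}" and t: "t \<in> cbox 0 1"
    show "((\<lambda>\<beta>. of_real t powr (\<beta> - 1) * g t) has_field_derivative
           of_real t powr (\<beta> - 2) * of_real (t * ln t) * g t) (at \<beta> within {\<beta>. Re \<beta> > 2})"
    proof (cases "t = 0")
      case True
      thus ?thesis by (simp add: powr_def)
    next
      case False
      with t have tpos: "t > 0" by auto
      have "((\<lambda>\<beta>. of_real t powr (\<beta> - 1)) has_field_derivative Ln (of_real t) * of_real t powr (\<beta> - 1) * 1) (at \<beta>)"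
        by (rule DERIV_chain2[OF has_field_derivative_powr_right]) (use tpos in \<open>auto intro!: derivative_eq_intros\<close>)
      hence "((\<lambda>\<beta>. of_real t powr (\<beta> - 1) * g t) has_field_derivative Ln (of_real t) * of_real t powr (\<beta> - 1) * 1 * g t) (at \<beta>)"
        by (rule DERIV_cmult_right)
      moreover have "Ln (of_real t) * of_real t powr (\<beta> - 1) * 1 * g t = of_real t powr (\<beta> - 2) * of_real (t * ln t) * g t"
      proof -
        have e: "\<beta> - 1 = (\<beta> - 2) + 1" by simp
        have "of_real t powr (\<beta> - 1) = of_real t powr (\<beta> - 2) * of_real t powr 1"
          by (subst e, rule powr_add)
        also have "(of_real t :: complex) powr 1 = of_real t" using tpos by simp
        finally show ?thesis using tpos by (simp add: Ln_of_real mult_ac)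
      qed
      ultimately show ?thesis by (metis has_field_derivative_at_within)
    qed
  next
    fix \<beta> :: complex assume \<beta>: "\<beta> \<in> {\<beta>. Re \<beta> > 2}"
    have "continuous_on {0..1} (\<lambda>t::real. of_real t powr (\<beta> - 1) * g t)"
      using \<beta> by (intro continuous_intros g) auto
    thus "(\<lambda>t. of_real t powr (\<beta> - 1) * g t) integrable_on cbox 0 1"
      by (simp add: integrable_continuous_interval)
  next
    have c1: "continuous_on ({\<beta>. Re \<beta> > 2} \<times> cbox 0 1) (\<lambda>p::complex\<times>real. of_real (snd p) powr (fst p - 2))"
      by (intro continuous_intros) auto
    have c2: "continuous_on ({\<beta>. Re \<beta> > 2} \<times> cbox 0 1) (\<lambda>p::complex\<times>real. of_real (snd p * ln (snd p)) :: complex)"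
      by (intro continuous_on_of_real continuous_on_compose2[OF xlnx_cont] continuous_intros) auto
    have c3: "continuous_on ({\<beta>. Re \<beta> > 2} \<times> cbox 0 1) (\<lambda>p::complex\<times>real. g (snd p))"
      by (intro continuous_on_compose2[OF g] continuous_intros) auto
    show "continuous_on ({\<beta>. Re \<beta> > 2} \<times> cbox 0 1) (\<lambda>(\<beta>, t). of_real t powr (\<beta> - 2) * of_real (t * ln t) * g t)"
      using continuous_on_mult[OF continuous_on_mult[OF c1 c2] c3] by (simp add: case_prod_unfold)
  qed (rule convex_halfspace_Re_gt)
  thus ?thesis by simp
qed


lemma reflect01:
  fixes h :: "real \<Rightarrow> complex"
  assumes "h integrable_on {0..1}"
  shows "integral {0..1} (\<lambda>t. h (1 - t)) = integral {0..1} h"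
proof -
  have "((\<lambda>x. h ((-1) * x + 1)) has_integral (1 / \<bar>-1\<bar>) *\<^sub>R integral {0..1} h) ((\<lambda>x. x / (-1) - 1 / (-1)) ` {0..1})"
    by (rule has_integral_affinity01[OF integrable_integral[OF assms]]) simp
  moreover have "(\<lambda>x::real. x / (-1) - 1 / (-1)) ` {0..1} = {0..1}"
  proof -
    have "(\<lambda>x::real. x / (-1) - 1 / (-1)) = (\<lambda>x. 1 - x)" by (rule ext) simp
    moreover have "(\<lambda>x::real. 1 - x) ` {0..1} = {0..1}"
      by (auto simp: image_iff intro!: bexI[of _ "1 - _"])
    ultimately show ?thesis by simp
  qed
  ultimately have "((\<lambda>x. h (1 - x)) has_integral integral {0..1} h) {0..1}" by simp
  thus ?thesis by (rule integral_unique)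
qed

lemma beta_real_complex:
  assumes "s > 0" "u > (0::real)"
  shows "integral {0..1} (\<lambda>t. of_real t powr (of_real s - 1) * of_real (1 - t) powr (of_real u - 1) :: complex)
         = Beta (of_real s) (of_real u)"
proof -
  have "((\<lambda>t. t powr (s - 1) * (1 - t) powr (u - 1)) has_integral Beta s u) {0..1}"
    by (rule has_integral_Beta_real) (use assms in auto)
  from has_integral_linear[OF this bounded_linear_of_real]
  have "((\<lambda>t. complex_of_real (t powr (s - 1) * (1 - t) powr (u - 1))) has_integral of_real (Beta s u)) {0..1}"
    by (simp add: o_def)
  moreover have "complex_of_real (t powr (s - 1) * (1 - t) powr (u - 1)) =
     of_real t powr (of_real s - 1) * of_real (1 - t) powr (of_real u - 1)" if "t \<in> {0..1}" for t
  proof -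
    have "of_real t powr (of_real s - 1) = of_real t powr (of_real (s - 1) :: complex)" by simp
    also have "\<dots> = of_real (t powr (s - 1))" using that by (intro powr_of_real) auto
    finally have 1: "of_real t powr (of_real s - 1) = (of_real (t powr (s - 1)) :: complex)" .
    have "of_real (1 - t) powr (of_real u - 1) = of_real (1 - t) powr (of_real (u - 1) :: complex)" by simp
    also have "\<dots> = of_real ((1 - t) powr (u - 1))" using that by (intro powr_of_real) auto
    finally have 2: "of_real (1 - t) powr (of_real u - 1) = (of_real ((1 - t) powr (u - 1)) :: complex)" .
    show ?thesis unfolding 1 2 by simp
  qed
  ultimately have "((\<lambda>t. of_real t powr (of_real s - 1) * of_real (1 - t) powr (of_real u - 1) :: complex) has_integral of_real (Beta s u)) {0..1}"
    by (subst (asm) has_integral_cong) auto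
  thus ?thesis by (simp add: integral_unique Beta_complex_of_real)
qed

lemma islimpt_reals_3: "(3::complex) islimpt (of_real ` {2<..})"
proof (rule islimpt_approachable[THEN iffD2], intro allI impI)
  fix e :: real assume e: "e > 0"
  define d where "d = min e 1 / 2"
  have d: "d > 0" "d < e" "d < 1" using e by (auto simp: d_def)
  have mem: "complex_of_real (3 + d) \<in> complex_of_real ` {2<..}"
    using d by (intro imageI) simp
  have ne: "complex_of_real (3 + d) \<noteq> 3"
  proof
    assume "complex_of_real (3 + d) = 3"
    hence "complex_of_real (3 + d) = complex_of_real 3" by simp
    hence "3 + d = 3" by (simp only: of_real_eq_iff)
    thus False using d by simp
  qed
  have "dist (complex_of_real (3 + d)) (complex_of_real 3) = dist (3 + d) (3::real)"
    by (rule dist_of_real)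
  hence dd: "dist (complex_of_real (3 + d)) 3 = d" using d by (simp add: dist_real_def)
  show "\<exists>x'\<in>(of_real ` {2<..} :: complex set). x' \<noteq> 3 \<and> dist x' 3 < e"
    by (rule bexI[OF _ mem], rule conjI[OF ne]) (use dd d in simp)
qed

lemma beta_complex:
  assumes b: "Re \<beta> > 2" and g: "Re \<gamma> > 2"
  shows "((\<lambda>t. of_real t powr (\<beta> - 1) * of_real (1 - t) powr (\<gamma> - 1)) has_integral Beta \<beta> \<gamma>) {0..1}"
proof -
  define S where "S = {z::complex. Re z > 2}"
  have oS: "open S" unfolding S_def by (rule open_halfspace_Re_gt)
  have cS: "connected S" unfolding S_def by (rule convex_connected[OF convex_halfspace_Re_gt])
  have US: "of_real ` {2<..} \<subseteq> S" by (auto simp: S_def)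
  have 3: "(3::complex) \<in> S" by (simp add: S_def)
  define J where "J = (\<lambda>\<beta> \<gamma> :: complex. integral {0..1} (\<lambda>t::real. of_real t powr (\<beta> - 1) * of_real (1 - t) powr (\<gamma> - 1)))"
  have npi: "z \<notin> \<int>\<^sub>\<le>\<^sub>0" if "z \<in> S" for z
  proof
    assume "z \<in> \<int>\<^sub>\<le>\<^sub>0" hence "Re z \<le> 0" by (auto elim!: nonpos_Ints_cases)
    thus False using that by (simp add: S_def)
  qed
  have contg: "continuous_on {0..1} (\<lambda>t::real. of_real (1 - t) powr (\<gamma>' - 1) :: complex)" if "Re \<gamma>' > 2" for \<gamma>'
    using that by (intro continuous_intros) auto
  have stepA: "J \<beta>' (of_real u) = Beta \<beta>' (of_real u)" if \<beta>': "\<beta>' \<in> S" and u: "u > 2" for \<beta>' u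
  proof -
    have "(\<lambda>\<beta>. J \<beta> (of_real u) - Beta \<beta> (of_real u)) \<beta>' = 0"
    proof (rule analytic_continuation[where f = "\<lambda>\<beta>. J \<beta> (of_real u) - Beta \<beta> (of_real u)", OF _ oS cS US 3 islimpt_reals_3 _ \<beta>'])
      show "(\<lambda>\<beta>. J \<beta> (of_real u) - Beta \<beta> (of_real u)) holomorphic_on S"
      proof (intro holomorphic_on_diff)
        show "(\<lambda>\<beta>. J \<beta> (of_real u)) holomorphic_on S"
          unfolding J_def S_def by (rule holo_mellin[OF contg]) (use u in simp)
        show "(\<lambda>\<beta>. Beta \<beta> (of_real u)) holomorphic_on S"
          by (intro holomorphic_Beta holomorphic_intros npi) (use u in \<open>auto simp: S_def\<close>)
      qed
      fix z :: complex assume "z \<in> of_real ` {2<..}"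
      then obtain s where s: "s > 2" "z = of_real s" by auto
      show "J z (of_real u) - Beta z (of_real u) = 0"
        unfolding s J_def using beta_real_complex[of s u] s u by simp
    qed
    thus ?thesis by simp
  qed
  have "(\<lambda>\<gamma>. J \<beta> \<gamma> - Beta \<beta> \<gamma>) \<gamma> = 0"
  proof (rule analytic_continuation[where f = "\<lambda>\<gamma>. J \<beta> \<gamma> - Beta \<beta> \<gamma>", OF _ oS cS US 3 islimpt_reals_3])
    have Jeq: "J \<beta> \<gamma>' = integral {0..1} (\<lambda>t::real. of_real t powr (\<gamma>' - 1) * of_real (1 - t) powr (\<beta> - 1))"
      if "\<gamma>' \<in> S" for \<gamma>'
    proof -
      have int: "(\<lambda>t::real. of_real t powr (\<gamma>' - 1) * of_real (1 - t) powr (\<beta> - 1)) integrable_on {0..1}"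
        using that b by (intro integrable_continuous_interval continuous_intros) (auto simp: S_def)
      show ?thesis unfolding J_def
        using reflect01[OF int] by (simp add: mult.commute)
    qed
    show "(\<lambda>\<gamma>. J \<beta> \<gamma> - Beta \<beta> \<gamma>) holomorphic_on S"
    proof (intro holomorphic_on_diff)
      have "(\<lambda>\<gamma>. integral {0..1} (\<lambda>t::real. of_real t powr (\<gamma> - 1) * of_real (1 - t) powr (\<beta> - 1))) holomorphic_on S"
        unfolding S_def by (rule holo_mellin[OF contg]) (use b in simp)
      thus "(\<lambda>\<gamma>. J \<beta> \<gamma>) holomorphic_on S"
        by (rule holomorphic_transform) (simp add: Jeq)
      show "(\<lambda>\<gamma>. Beta \<beta> \<gamma>) holomorphic_on S"
        by (intro holomorphic_Beta holomorphic_intros npi) (use b in \<open>auto simp: S_def\<close>)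
    qed
    fix z :: complex assume "z \<in> of_real ` {2<..}"
    then obtain u where u: "u > 2" "z = of_real u" by auto
    show "J \<beta> z - Beta \<beta> z = 0" using stepA[of \<beta> u] b u by (simp add: S_def)
  qed (use g in \<open>simp add: S_def\<close>)
  hence "J \<beta> \<gamma> = Beta \<beta> \<gamma>" by simp
  moreover have "(\<lambda>t::real. of_real t powr (\<beta> - 1) * of_real (1 - t) powr (\<gamma> - 1)) integrable_on {0..1}"
    using b g by (intro integrable_continuous_interval continuous_intros) auto
  ultimately show ?thesis unfolding J_def using integrable_integral by force
qed

lemma not_nonpos_iff: "(z::complex) \<notin> \<real>\<^sub>\<le>\<^sub>0 \<Longrightarrow> Re z > 0 \<or> Im z \<noteq> 0"
  by (auto simp: complex_nonpos_Reals_iff)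

lemma base_not_nonpos:
  assumes x: "x \<in> cut_plane" and t: "t \<in> {0..1::real}"
  shows "1 - x * of_real t \<notin> \<real>\<^sub>\<le>\<^sub>0"
proof
  assume "1 - x * of_real t \<in> \<real>\<^sub>\<le>\<^sub>0"
  hence re: "1 - Re x * t \<le> 0" and im: "Im x * t = 0" by (auto simp: complex_nonpos_Reals_iff)
  have "t \<noteq> 0" using re by auto
  hence "t > 0" using t by auto
  hence "Im x = 0" using im by simp
  hence "Re x < 1" using x by (simp add: mem_cut_plane)
  have "Re x * t \<le> Re x" if "Re x \<ge> 0" using t that by (intro mult_left_le) auto
  moreover have "Re x * t \<le> 0" if "Re x < 0" using t that by (intro mult_nonpos_nonneg) auto
  ultimately show False using re \<open>Re x < 1\<close> by (cases "Re x \<ge> 0") auto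
qed

lemma base_facts:
  assumes "x \<in> cut_plane" "t \<in> {0..1::real}"
  shows "0 \<le> Re (1 - x * of_real t) \<or> Im (1 - x * of_real t) \<noteq> 0" "1 - x * of_real t \<noteq> 0"
proof -
  have nn: "1 - x * of_real t \<notin> \<real>\<^sub>\<le>\<^sub>0" by (rule base_not_nonpos[OF assms])
  from not_nonpos_iff[OF nn] show "0 \<le> Re (1 - x * of_real t) \<or> Im (1 - x * of_real t) \<noteq> 0" by auto
  show "1 - x * of_real t \<noteq> 0"
  proof
    assume "1 - x * of_real t = 0"
    with nn show False by simp
  qed
qed

definition wfun :: "complex \<Rightarrow> complex \<Rightarrow> real \<Rightarrow> complex" where
  "wfun b c t = of_real t powr (b - 1) * of_real (1 - t) powr (c - b - 1)"

lemma wfun_cont: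
  assumes "Re b > 2" "Re (c - b) > 2"
  shows "continuous_on {0..1} (wfun b c)"
  unfolding wfun_def using assms by (intro continuous_intros) auto

definition Efun :: "complex \<Rightarrow> complex \<Rightarrow> complex \<Rightarrow> complex \<Rightarrow> complex" where
  "Efun a b c x = integral {0..1} (\<lambda>t. wfun b c t * (1 - x * of_real t) powr (-a))"

lemma Efun_holo_ball:
  assumes b: "Re b > 2" "Re (c - b) > 2" and B: "ball x0 e \<subseteq> cut_plane"
  shows "Efun a b c holomorphic_on ball x0 e"
proof -
  have wc: "continuous_on {0..1} (wfun b c)" by (rule wfun_cont[OF b])
  have "(\<lambda>x. integral (cbox 0 1) (\<lambda>t. wfun b c t * (1 - x * of_real t) powr (-a))) holomorphic_on ball x0 e"
  proof (rule leibniz_rule_holomorphic[where fx = "\<lambda>x t. wfun b c t * ((-a) * (1 - x * of_real t) powr (-a - 1) * (- of_real t))"])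
    fix x t assume x: "x \<in> ball x0 e" and t: "t \<in> cbox 0 (1::real)"
    have nn: "1 - x * of_real t \<notin> \<real>\<^sub>\<le>\<^sub>0" using base_not_nonpos[of x t] x t B by auto
    have "((\<lambda>x. (1 - x * of_real t) powr (-a)) has_field_derivative ((-a) * (1 - x * of_real t) powr (-a - 1) * (- of_real t))) (at x)"
      by (rule DERIV_chain2[where g = "\<lambda>x. 1 - x * of_real t" and x = x, OF has_field_derivative_powr[OF nn]]) (auto intro!: derivative_eq_intros)
    hence "((\<lambda>x. wfun b c t * (1 - x * of_real t) powr (-a)) has_field_derivative
            wfun b c t * ((-a) * (1 - x * of_real t) powr (-a - 1) * (- of_real t))) (at x)"
      by (rule DERIV_cmult)
    thus "((\<lambda>x. wfun b c t * (1 - x * of_real t) powr (-a)) has_field_derivative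
            wfun b c t * ((-a) * (1 - x * of_real t) powr (-a - 1) * (- of_real t))) (at x within ball x0 e)"
      by (rule has_field_derivative_at_within)
  next
    fix x assume x: "x \<in> ball x0 e"
    have "continuous_on {0..1} (\<lambda>t. wfun b c t * (1 - x * of_real t) powr (-a))"
    proof (intro continuous_on_mult wc continuous_on_powr_complex)
      show "{0..1} \<subseteq> {t. 0 \<le> Re (1 - x * of_real t) \<or> Im (1 - x * of_real t) \<noteq> 0}"
        using base_facts(1)[of x] x B by blast
      show "\<And>t. t \<in> {0..1} \<Longrightarrow> 1 - x * of_real t = 0 \<Longrightarrow> 0 < Re (- a)"
        using base_facts(2)[of x] x B by blast
    qed (intro continuous_intros)+
    thus "(\<lambda>t. wfun b c t * (1 - x * of_real t) powr (-a)) integrable_on cbox 0 1"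
      by (simp add: integrable_continuous_interval)
  next
    have c1: "continuous_on (ball x0 e \<times> cbox 0 1) (\<lambda>p::complex\<times>real. wfun b c (snd p))"
      by (intro continuous_on_compose2[OF wc] continuous_intros) auto
    have c2: "continuous_on (ball x0 e \<times> cbox 0 1) (\<lambda>p::complex\<times>real. (1 - fst p * of_real (snd p)) powr (-a - 1))"
    proof (intro continuous_on_powr_complex)
      show "ball x0 e \<times> cbox 0 1 \<subseteq> {p. 0 \<le> Re (1 - fst p * of_real (snd p)) \<or> Im (1 - fst p * of_real (snd p)) \<noteq> 0}"
      proof
        fix p assume p: "p \<in> ball x0 e \<times> cbox 0 (1::real)"
        hence "fst p \<in> cut_plane" "snd p \<in> {0..1}" using B by auto
        from base_facts(1)[OF this]
        show "p \<in> {p. 0 \<le> Re (1 - fst p * of_real (snd p)) \<or> Im (1 - fst p * of_real (snd p)) \<noteq> 0}" by simp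
      qed
      show "\<And>p. p \<in> ball x0 e \<times> cbox 0 1 \<Longrightarrow> 1 - fst p * of_real (snd p) = 0 \<Longrightarrow> 0 < Re (- a - 1)"
      proof -
        fix p assume p: "p \<in> ball x0 e \<times> cbox 0 (1::real)" and z: "1 - fst p * of_real (snd p) = 0"
        hence "fst p \<in> cut_plane" "snd p \<in> {0..1}" using B by auto
        from base_facts(2)[OF this] z show "0 < Re (- a - 1)" by simp
      qed
    qed (intro continuous_intros)+
    have "continuous_on (ball x0 e \<times> cbox 0 1) (\<lambda>p::complex\<times>real. wfun b c (snd p) * ((-a) * (1 - fst p * of_real (snd p)) powr (-a - 1) * (- of_real (snd p))))"
      by (intro continuous_on_mult c1 c2 continuous_intros)
    thus "continuous_on (ball x0 e \<times> cbox 0 1) (\<lambda>(x, t). wfun b c t * ((-a) * (1 - x * of_real t) powr (-a - 1) * (- of_real t)))"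
      by (simp add: case_prod_unfold)
  qed (rule convex_ball)
  thus ?thesis unfolding Efun_def[abs_def] by simp
qed

lemma Efun_holo:
  assumes b: "Re b > 2" "Re (c - b) > 2"
  shows "Efun a b c holomorphic_on cut_plane"
proof -
  have "Efun a b c field_differentiable (at x)" if x: "x \<in> cut_plane" for x
  proof -
    obtain e where e: "e > 0" "ball x e \<subseteq> cut_plane"
      using open_contains_ball_eq[OF open_cut_plane] x by blast
    have "Efun a b c holomorphic_on ball x e" by (rule Efun_holo_ball[OF b e(2)])
    thus ?thesis using e(1) by (intro holomorphic_on_imp_differentiable_at[of _ "ball x e"]) auto
  qed
  thus ?thesis by (simp add: holomorphic_on_def field_differentiable_at_within)
qed


lemma norm_ofreal_powr_le1:
  assumes "t \<in> {0..1::real}" "Re z \<ge> 0"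
  shows "norm (of_real t powr z :: complex) \<le> 1"
proof -
  have "norm (of_real t powr z :: complex) = t powr Re z"
    using assms by (subst norm_powr_real_powr) auto
  also have "\<dots> \<le> 1 powr Re z" using assms by (intro powr_mono2) auto
  finally show ?thesis by simp
qed

lemma wfun_bound:
  assumes "Re b > 2" "Re (c - b) > 2" "t \<in> {0..1}"
  shows "norm (wfun b c t) \<le> 1"
proof -
  have "norm (wfun b c t) = norm (of_real t powr (b - 1) :: complex) * norm (of_real (1 - t) powr (c - b - 1) :: complex)"
    by (simp add: wfun_def norm_mult)
  also have "\<dots> \<le> 1 * 1"
    using assms by (intro mult_mono norm_ofreal_powr_le1) auto
  finally show ?thesis by simp
qed

lemma wfun_pow:
  assumes "t \<in> {0..1}"
  shows "wfun b c t * of_real t ^ n = of_real t powr ((b + of_nat n) - 1) * of_real (1 - t) powr ((c - b) - 1)"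
proof (cases "t = 0")
  case True
  thus ?thesis by (simp add: wfun_def powr_def)
next
  case False
  hence "t > 0" using assms by auto
  have e: "b + of_nat n - 1 = (b - 1) + of_nat n" by simp
  have "of_real t powr (b + of_nat n - 1) = of_real t powr (b - 1) * (of_real t powr of_nat n :: complex)"
    unfolding e by (rule powr_add)
  also have "(of_real t powr of_nat n :: complex) = of_real t ^ n" using \<open>t > 0\<close> by (simp add: powr_nat')
  finally show ?thesis by (simp add: wfun_def mult_ac)
qed

lemma gchoose_f2: "((-a) gchoose n) * (-x) ^ n = f2 a 1 1 n * x ^ n"
proof -
  have p1: "pochhammer (1::complex) n = fact n" by (simp add: pochhammer_fact)
  have s: "(-1::complex) ^ n * (-1) ^ n = 1" by (simp add: power_mult_distrib[symmetric])
  have "((-a) gchoose n) * (-x) ^ n = ((-1) ^ n * (-1) ^ n) * (pochhammer a n / fact n * x ^ n)"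
    by (simp add: gbinomial_pochhammer power_minus[of x] mult_ac)
  also have "\<dots> = f2 a 1 1 n * x ^ n" using p1 by (simp add: s f2_def)
  finally show ?thesis .
qed

lemma Beta_shift:
  assumes b: "Re b > 2" "Re (c - b) > 2"
  shows "Beta (b + of_nat n) (c - b) = Beta b (c - b) * (pochhammer b n / pochhammer c n)"
proof -
  have bn: "b \<notin> \<int>\<^sub>\<le>\<^sub>0" using b by (auto elim!: nonpos_Ints_cases)
  have cn: "c \<notin> \<int>\<^sub>\<le>\<^sub>0" using b by (auto elim!: nonpos_Ints_cases)
  have Gb: "Gamma b \<noteq> 0" "Gamma c \<noteq> 0" using bn cn by (auto simp: Gamma_eq_zero_iff)
  have gb: "Gamma (b + of_nat n) = pochhammer b n * Gamma b" using pochhammer_Gamma[OF bn, of n] Gb by (simp add: field_simps)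
  have gc: "Gamma (c + of_nat n) = pochhammer c n * Gamma c" using pochhammer_Gamma[OF cn, of n] Gb by (simp add: field_simps)
  have pc: "pochhammer c n \<noteq> 0" using cn by (auto simp: pochhammer_eq_0_iff)
  have e: "b + of_nat n + (c - b) = c + of_nat n" by simp
  show ?thesis unfolding Beta_def e gb gc using Gb pc by (simp add: field_simps)
qed

lemma Efun_series:
  assumes b: "Re b > 2" "Re (c - b) > 2" and x: "norm x < 1"
  shows "(\<lambda>n. Beta b (c - b) * (f2 a b c n * x ^ n)) sums Efun a b c x"
proof -
  define \<phi> where "\<phi> = (\<lambda>n t. wfun b c t * (((-a) gchoose n) * (-(x * of_real t)) ^ n))"
  define M where "M = (\<lambda>n. norm (f2 a 1 1 n * x ^ n))"
  have wc: "continuous_on {0..1} (wfun b c)" by (rule wfun_cont[OF b])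
  have bound: "norm (\<phi> n t) \<le> M n" if t: "t \<in> {0..1}" for n t
  proof -
    have "norm (\<phi> n t) = norm (wfun b c t) * (norm (((-a) gchoose n) * (-x) ^ n) * \<bar>t\<bar> ^ n)"
      by (simp add: \<phi>_def norm_mult norm_power mult_ac power_mult_distrib)
    also have "\<dots> \<le> 1 * (norm (((-a) gchoose n) * (-x) ^ n) * 1)"
      using t wfun_bound[OF b t] by (intro mult_mono mult_left_mono power_le_one) auto
    also have "\<dots> = M n" by (simp add: M_def gchoose_f2)
    finally show ?thesis .
  qed
  have sM: "summable M" unfolding M_def by (rule f2_abs_summable[OF x])
  have ul: "uniform_limit {0..1} (\<lambda>N t. \<Sum>n<N. \<phi> n t) (\<lambda>t. \<Sum>n. \<phi> n t) sequentially"
    by (rule Weierstrass_m_test[OF bound sM])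
  have lim_eq: "(\<Sum>n. \<phi> n t) = wfun b c t * (1 - x * of_real t) powr (-a)" if t: "t \<in> {0..1}" for t
  proof -
    have "norm (-(x * of_real t)) < 1"
    proof -
      have "norm (-(x * of_real t)) = norm x * \<bar>t\<bar>" by (simp add: norm_mult)
      also have "\<dots> \<le> norm x * 1" using t by (intro mult_left_mono) auto
      finally show ?thesis using x by simp
    qed
    from gen_binomial_complex[OF this, of "-a"]
    have "(\<lambda>n. ((-a) gchoose n) * (-(x * of_real t)) ^ n) sums (1 + -(x * of_real t)) powr (-a)" .
    from sums_mult[OF this, of "wfun b c t"]
    have "(\<lambda>n. \<phi> n t) sums (wfun b c t * (1 - x * of_real t) powr (-a))" by (simp add: \<phi>_def)
    thus ?thesis by (rule sums_unique[symmetric])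
  qed
  have cont: "continuous_on {0..1} (\<lambda>t. \<Sum>n<N. \<phi> n t)" for N
    unfolding \<phi>_def by (intro continuous_intros wc)
  obtain I J where I: "\<And>N. ((\<lambda>t. \<Sum>n<N. \<phi> n t) has_integral I N) {0..1}"
    and J: "((\<lambda>t. \<Sum>n. \<phi> n t) has_integral J) {0..1}" and IJ: "I \<longlonglongrightarrow> J"
    by (rule uniform_limit_integral[OF ul cont]) auto
  have JE: "J = Efun a b c x"
  proof -
    have "((\<lambda>t. wfun b c t * (1 - x * of_real t) powr (-a)) has_integral J) {0..1}"
      using J by (subst (asm) has_integral_cong[OF lim_eq]) auto
    thus ?thesis unfolding Efun_def by (rule integral_unique[symmetric])
  qed
  have phi_int: "(\<phi> n has_integral (((-a) gchoose n) * (-x) ^ n * Beta (b + of_nat n) (c - b))) {0..1}" for n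
  proof -
    have "((\<lambda>t. of_real t powr ((b + of_nat n) - 1) * of_real (1 - t) powr ((c - b) - 1)) has_integral Beta (b + of_nat n) (c - b)) {0..1}"
      by (rule beta_complex) (use b in auto)
    hence "((\<lambda>t. wfun b c t * of_real t ^ n) has_integral Beta (b + of_nat n) (c - b)) {0..1}"
      by (subst has_integral_cong[OF wfun_pow]) auto
    from has_integral_mult_right[OF this, of "((-a) gchoose n) * (-x) ^ n"]
    have h: "((\<lambda>t. ((-a) gchoose n) * (-x) ^ n * (wfun b c t * of_real t ^ n)) has_integral
        (((-a) gchoose n) * (-x) ^ n * Beta (b + of_nat n) (c - b))) {0..1}" .
    have pe: "\<phi> n t = ((-a) gchoose n) * (-x) ^ n * (wfun b c t * of_real t ^ n)" for t
    proof -
      have "-(x * of_real t) = (-x) * of_real t" by simp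
      hence "(-(x * of_real t)) ^ n = (-x) ^ n * of_real t ^ n" by (simp only: power_mult_distrib)
      thus ?thesis by (simp add: \<phi>_def mult_ac)
    qed
    show ?thesis using h by (simp only: pe[abs_def])
  qed
  have IN: "I N = (\<Sum>n<N. ((-a) gchoose n) * (-x) ^ n * Beta (b + of_nat n) (c - b))" for N
  proof -
    have "((\<lambda>t. \<Sum>n<N. \<phi> n t) has_integral (\<Sum>n<N. ((-a) gchoose n) * (-x) ^ n * Beta (b + of_nat n) (c - b))) {0..1}"
      by (rule has_integral_sum) (auto intro: phi_int)
    with I[of N] show ?thesis by (rule has_integral_unique)
  qed
  have "(\<lambda>n. ((-a) gchoose n) * (-x) ^ n * Beta (b + of_nat n) (c - b)) sums Efun a b c x"
  proof -
    have Ieq: "I = (\<lambda>N. \<Sum>n<N. ((-a) gchoose n) * (-x) ^ n * Beta (b + of_nat n) (c - b))"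
      by (rule ext) (rule IN)
    show ?thesis unfolding sums_def using IJ unfolding Ieq JE .
  qed
  moreover have "((-a) gchoose n) * (-x) ^ n * Beta (b + of_nat n) (c - b) = Beta b (c - b) * (f2 a b c n * x ^ n)" for n
    unfolding gchoose_f2 Beta_shift[OF b] by (simp add: f2_def pochhammer_fact mult_ac)
  ultimately show ?thesis by simp
qed

lemma re_pos_not_npi: "Re (z::complex) > 0 \<Longrightarrow> z \<notin> \<int>\<^sub>\<le>\<^sub>0"
  by (auto elim!: nonpos_Ints_cases)

lemma euler_exists':
  assumes b: "Re b > 2" "Re (c - b) > 2"
  shows "\<exists>G. Cont [a, b] [c] G"
proof -
  have bn: "b \<notin> \<int>\<^sub>\<le>\<^sub>0" "c - b \<notin> \<int>\<^sub>\<le>\<^sub>0" "c \<notin> \<int>\<^sub>\<le>\<^sub>0"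
    using re_pos_not_npi[of b] re_pos_not_npi[of "c - b"] re_pos_not_npi[of c] b by auto
  have Bnz: "Beta b (c - b) \<noteq> 0" using bn by (simp add: Beta_def Gamma_eq_zero_iff)
  have "Cont [a, b] [c] (\<lambda>x. Efun a b c x / Beta b (c - b))"
    unfolding Cont_def
  proof safe
    show "(\<lambda>x. Efun a b c x / Beta b (c - b)) holomorphic_on cut_plane"
      using Efun_holo[OF b] Bnz by (intro holomorphic_intros) auto
    fix z :: complex assume z: "norm z < 1"
    from sums_divide[OF Efun_series[OF b z, of a], of "Beta b (c - b)"]
    have "(\<lambda>n. f2 a b c n * z ^ n) sums (Efun a b c z / Beta b (c - b))" using Bnz by simp
    thus "Efun a b c z / Beta b (c - b) = hyp_series [a, b] [c] z"
      by (simp add: hyp_series_def hyp_coeff_2 sums_iff)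
  qed
  thus ?thesis by blast
qed

lemma euler_exists:
  assumes "Re b > 2" "Re (c - b) > 2"
  shows "\<exists>G. Cont [a, b] [c] G"
  by (rule euler_exists'[OF assms])

lemma not_npi_add:
  fixes c :: complex
  assumes "\<forall>n::nat. c \<noteq> - of_nat n"
  shows "\<forall>n::nat. c + of_nat m \<noteq> - of_nat n"
proof
  fix n :: nat
  show "c + of_nat m \<noteq> - of_nat n"
  proof
    assume "c + of_nat m = - of_nat n"
    hence "c = - of_nat n - of_nat m" by (simp add: algebra_simps)
    hence "c = - of_nat (n + m)" by simp
    thus False using assms by blast
  qed
qed

lemma Cont_exists:
  assumes c: "\<forall>n::nat. c \<noteq> - of_nat n"
  shows "\<exists>G. Cont [a, b] [c] G"
proof -
  obtain k :: nat where k: "real k > 2 - Re b" using reals_Archimedean2 by blast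
  obtain j :: nat where j: "real j > Re b + real k + 2 - Re c" using reals_Archimedean2 by blast
  define c' where "c' = c + of_nat j"
  have c'npi: "\<forall>n::nat. c' \<noteq> - of_nat n"
  proof
    fix n :: nat
    have "Re c' > 0" using j k by (simp add: c'_def)
    thus "c' \<noteq> - of_nat n" by (auto)
  qed
  have step1: "i \<le> k \<Longrightarrow> \<exists>G. Cont [a, b + of_nat (k - i)] [c'] G" for i
  proof (induction i)
    case 0
    show ?case using euler_exists[of "b + of_nat k" c' a] j k by (simp add: c'_def)
  next
    case (Suc i)
    then obtain G where G: "Cont [a, b + of_nat (k - i)] [c'] G" by auto
    have ne: "c' \<noteq> b + of_nat (k - i)"
    proof
      assume "c' = b + of_nat (k - i)"
      hence "Re c' = Re b + real (k - i)" by simp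
      moreover have "real (k - i) \<le> real k" by simp
      ultimately show False using j by (simp add: c'_def)
    qed
    from Cont_lower_b[OF G c'npi ne]
    have "\<exists>G. Cont [a, b + of_nat (k - i) - 1] [c'] G" by blast
    moreover have "b + of_nat (k - i) - 1 = b + of_nat (k - Suc i)"
      using Suc.prems by (simp add: of_nat_diff)
    ultimately show ?case by simp
  qed
  from step1[of k] have base: "\<exists>G. Cont [a, b] [c + of_nat j] G" by (simp add: c'_def)
  have step2: "i \<le> j \<Longrightarrow> \<exists>G. Cont [a, b] [c + of_nat (j - i)] G" for i
  proof (induction i)
    case 0 thus ?case using base by simp
  next
    case (Suc i)
    then obtain G where G: "Cont [a, b] [c + of_nat (j - i)] G" by auto
    have ne: "c + of_nat (j - i) \<noteq> 1"
    proof
      assume "c + of_nat (j - i) = 1"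
      hence "c = - of_nat (j - i - 1)" using Suc.prems by (simp add: of_nat_diff algebra_simps)
      thus False using c by blast
    qed
    from Cont_lower_c[OF G not_npi_add[OF c] ne]
    have "\<exists>G. Cont [a, b] [c + of_nat (j - i) - 1] G" by blast
    moreover have "c + of_nat (j - i) - 1 = c + of_nat (j - Suc i)"
      using Suc.prems by (simp add: of_nat_diff)
    ultimately show ?case by simp
  qed
  from step2[of j] show ?thesis by simp
qed

lemma norm_poch_shift_le:
  fixes a :: complex
  shows "norm (pochhammer (a + of_nat n) j) \<le> pochhammer (norm a + real n) j"
proof -
  have "norm (pochhammer (a + of_nat n) j) = (\<Prod>i = 0..<j. norm (a + of_nat n + of_nat i))"
    by (simp add: pochhammer_prod prod_norm)
  also have "\<dots> \<le> (\<Prod>i = 0..<j. norm a + real n + real i)"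
  proof (rule prod_mono)
    fix i assume "i \<in> {0..<j}"
    have "norm (a + of_nat n + of_nat i) \<le> norm a + norm (of_nat n :: complex) + norm (of_nat i :: complex)"
      by (meson norm_triangle_ineq add_mono order_trans order_refl)
    thus "0 \<le> norm (a + of_nat n + of_nat i) \<and> norm (a + of_nat n + of_nat i) \<le> norm a + real n + real i"
      by simp
  qed
  also have "\<dots> = pochhammer (norm a + real n) j" by (simp add: pochhammer_prod)
  finally show ?thesis .
qed

lemma poch_nonneg_real: "(0::real) \<le> x \<Longrightarrow> 0 \<le> pochhammer x n"
  unfolding pochhammer_prod by (intro prod_nonneg) auto

lemma binom_real_sums:
  assumes "0 \<le> r" "r < (1::real)"
  shows "(\<lambda>j. pochhammer A j / fact j * r ^ j) sums (1 - r) powr (-A)"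
proof -
  have "\<bar>-r\<bar> < 1" using assms by simp
  from gen_binomial_real[OF this, of "-A"]
  have "(\<lambda>j. ((-A) gchoose j) * (-r) ^ j) sums (1 + - r) powr (-A)" .
  moreover have "((-A) gchoose j) * (-r) ^ j = pochhammer A j / fact j * r ^ j" for j
  proof -
    have "((-A) gchoose j) * (-r) ^ j = ((-1) ^ j * (-1) ^ j) * (pochhammer A j / fact j * r ^ j)"
      by (simp add: gbinomial_pochhammer power_minus[of r] mult_ac)
    also have "(-1::real) ^ j * (-1) ^ j = 1" by (simp add: power_mult_distrib[symmetric])
    finally show ?thesis by simp
  qed
  ultimately show ?thesis by simp
qed

lemma diag_identity:
  fixes a b c x :: complex
  assumes c: "\<forall>n::nat. c \<noteq> - of_nat n"
  shows "(\<Sum>n\<le>N. f2 a (c - b) c n * (-1) ^ n * x ^ n * ((-a - of_nat n) gchoose (N - n)) * (-x) ^ (N - n))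
         = f2 a b c N * x ^ N"
proof -
  define \<beta> where "\<beta> = c - b"
  have cN: "pochhammer c N \<noteq> 0" by (rule poch_nz[OF c])
  have tm: "f2 a \<beta> c n * (-1) ^ n * x ^ n * ((-a - of_nat n) gchoose (N - n)) * (-x) ^ (N - n)
      = x ^ N * (pochhammer a N / pochhammer c N) * (((-\<beta>) gchoose n) * ((c + of_nat N - 1) gchoose (N - n)))"
    if n: "n \<le> N" for n
  proof -
    have pa: "pochhammer a N = pochhammer a n * pochhammer (a + of_nat n) (N - n)"
      using pochhammer_product[OF n, of a] .
    have pc: "pochhammer c N = pochhammer c n * pochhammer (c + of_nat n) (N - n)"
      using pochhammer_product[OF n, of c] .
    have cn: "pochhammer c n \<noteq> 0" by (rule poch_nz[OF c])
    have cn2: "pochhammer (c + of_nat n) (N - n) \<noteq> 0" using cN pc by simp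
    have g1: "(-a - of_nat n) gchoose (N - n) = (-1) ^ (N - n) * pochhammer (a + of_nat n) (N - n) / fact (N - n)"
      by (simp add: gbinomial_pochhammer algebra_simps)
    have g2: "(-\<beta>) gchoose n = (-1) ^ n * pochhammer \<beta> n / fact n"
      by (simp add: gbinomial_pochhammer)
    have "c + of_nat N - 1 - of_nat (N - n) + 1 = c + of_nat n" using n by (simp add: of_nat_diff)
    hence g3: "(c + of_nat N - 1) gchoose (N - n) = pochhammer (c + of_nat n) (N - n) / fact (N - n)"
      by (simp add: gbinomial_pochhammer')
    have xN: "x ^ N = x ^ n * x ^ (N - n)" using n by (simp add: power_add[symmetric])
    have mx: "(-x) ^ (N - n) = (-1) ^ (N - n) * x ^ (N - n)" by (simp add: power_minus[of x])
    have s: "(-1::complex) ^ (N - n) * (-1) ^ (N - n) = 1" by (simp add: power_mult_distrib[symmetric])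
    show ?thesis
      unfolding g1 g2 g3 pa pc xN mx f2_def
      using cn cn2 s by (simp add: field_simps)
  qed
  have "(\<Sum>n\<le>N. f2 a (c - b) c n * (-1) ^ n * x ^ n * ((-a - of_nat n) gchoose (N - n)) * (-x) ^ (N - n))
      = (\<Sum>n\<le>N. x ^ N * (pochhammer a N / pochhammer c N) * (((-\<beta>) gchoose n) * ((c + of_nat N - 1) gchoose (N - n))))"
    unfolding \<beta>_def[symmetric] by (intro sum.cong refl tm) simp
  also have "\<dots> = x ^ N * (pochhammer a N / pochhammer c N) * (\<Sum>n=0..N. ((-\<beta>) gchoose n) * ((c + of_nat N - 1) gchoose (N - n)))"
    by (simp add: sum_distrib_left atMost_atLeast0)
  also have "(\<Sum>n=0..N. ((-\<beta>) gchoose n) * ((c + of_nat N - 1) gchoose (N - n))) = (-\<beta> + (c + of_nat N - 1)) gchoose N"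
    by (rule gbinomial_Vandermonde)
  also have "-\<beta> + (c + of_nat N - 1) = b + of_nat N - 1" by (simp add: \<beta>_def)
  also have "(b + of_nat N - 1) gchoose N = pochhammer b N / fact N"
    by (simp add: gbinomial_pochhammer')
  finally show ?thesis using cN by (simp add: f2_def field_simps)
qed


lemma eval_F2_sums: "norm z < 1 \<Longrightarrow> (\<lambda>n. f2 a b c n * z ^ n) sums eval_fps (F2 a b c) z"
  using summable_norm_cancel[OF f2_abs_summable] unfolding eval_fps_def F2_def
  by (simp add: summable_sums)

lemma pfaff_small:
  fixes a b c x :: complex
  assumes x: "norm x < 1/2" and c: "\<forall>n::nat. c \<noteq> - of_nat n"
  shows "eval_fps (F2 a b c) x = (1 - x) powr (-a) * eval_fps (F2 a (c - b) c) (x / (x - 1))"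
proof -
  define r where "r = norm x"
  define A where "A = norm a"
  define w where "w = x / (x - 1)"
  define h where "h = f2 a (c - b) c"
  have r: "0 \<le> r" "r < 1/2" using x by (auto simp: r_def)
  have A: "A \<ge> 0" by (simp add: A_def)
  have x1: "1 - x \<noteq> 0" "x - 1 \<noteq> 0" using r by (auto simp: r_def)
  have nx1: "norm (x - 1) \<ge> 1 - r"
  proof -
    have "1 = norm ((1 - x) + x)" by simp
    also have "\<dots> \<le> norm (1 - x) + r" unfolding r_def by (rule norm_triangle_ineq)
    finally show ?thesis by (simp add: norm_minus_commute)
  qed
  have nw: "norm w \<le> r / (1 - r)"
    unfolding w_def norm_divide r_def[symmetric] using r nx1
    by (intro divide_left_mono mult_pos_pos) auto
  have "r / (1 - r) < 1" using r by (simp add: field_simps)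
  with nw have nw1: "norm w < 1" by linarith
  define U where "U = (\<lambda>(n, j). h n * (-1) ^ n * x ^ n * ((-a - of_nat n) gchoose j) * (-x) ^ j)"
  define V where "V = (\<lambda>(n::nat, j::nat). norm (h n) * r ^ n * (pochhammer (A + real n) j / fact j * r ^ j))"
  have bound: "norm (U (n, j)) \<le> V (n, j)" for n j
  proof -
    have g: "(-a - of_nat n) gchoose j = (-1) ^ j * pochhammer (a + of_nat n) j / fact j"
      by (simp add: gbinomial_pochhammer algebra_simps)
    have "norm ((-a - of_nat n) gchoose j) = norm (pochhammer (a + of_nat n) j) / fact j"
      unfolding g by (simp add: norm_mult norm_divide norm_power)
    also have "\<dots> \<le> pochhammer (A + real n) j / fact j"
      unfolding A_def by (intro divide_right_mono norm_poch_shift_le) auto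
    finally have "norm ((-a - of_nat n) gchoose j) \<le> pochhammer (A + real n) j / fact j" .
    hence "norm (h n) * r ^ n * norm ((-a - of_nat n) gchoose j) * r ^ j \<le>
           norm (h n) * r ^ n * (pochhammer (A + real n) j / fact j) * r ^ j"
      using r by (intro mult_right_mono mult_left_mono) auto
    thus ?thesis by (simp add: U_def V_def norm_mult norm_power r_def mult_ac)
  qed
  have rowV: "((\<lambda>j. V (n, j)) has_sum (norm (h n) * r ^ n * (1 - r) powr (-(A + real n)))) UNIV" for n
  proof -
    have "(\<lambda>j. pochhammer (A + real n) j / fact j * r ^ j) sums (1 - r) powr (-(A + real n))"
      using r by (intro binom_real_sums) auto
    hence "(\<lambda>j. norm (h n) * r ^ n * (pochhammer (A + real n) j / fact j * r ^ j)) sums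
             (norm (h n) * r ^ n * (1 - r) powr (-(A + real n)))"
      by (rule sums_mult)
    hence "((\<lambda>j. norm (h n) * r ^ n * (pochhammer (A + real n) j / fact j * r ^ j)) has_sum
             (norm (h n) * r ^ n * (1 - r) powr (-(A + real n)))) UNIV"
      using r A by (intro sums_nonneg_imp_has_sum) (auto intro!: mult_nonneg_nonneg poch_nonneg_real divide_nonneg_nonneg)
    thus ?thesis by (simp add: V_def)
  qed
  have gsum: "(\<lambda>n. norm (h n) * r ^ n * (1 - r) powr (-(A + real n))) summable_on UNIV"
  proof -
    have eq: "norm (h n) * r ^ n * (1 - r) powr (-(A + real n)) =
              (1 - r) powr (-A) * norm (h n * of_real (r / (1 - r)) ^ n)" for n
    proof -
      have "(1 - r) powr (-(A + real n)) = (1 - r) powr (-A) / (1 - r) powr (real n)"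
        by (simp add: powr_diff[symmetric])
      also have "(1 - r) powr (real n) = (1 - r) ^ n" using r by (simp add: powr_realpow)
      finally have p: "(1 - r) powr (-(A + real n)) = (1 - r) powr (-A) / (1 - r) ^ n" .
      have n1: "norm (h n * of_real (r / (1 - r)) ^ n) = norm (h n) * (r / (1 - r)) ^ n"
        by (simp only: norm_mult norm_power norm_of_real) (use r in simp)
      show ?thesis unfolding n1 p power_divide using r by (simp add: field_simps)
    qed
    have "norm (of_real (r / (1 - r)) :: complex) < 1"
    proof -
      have "r / (1 - r) < 1" "0 \<le> r / (1 - r)" using r by (simp_all add: field_simps)
      thus ?thesis by (simp only: norm_of_real)
    qed
    from f2_abs_summable[OF this, of a "c - b" c]
    have "summable (\<lambda>n. (1 - r) powr (-A) * norm (h n * of_real (r / (1 - r)) ^ n))"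
      unfolding h_def by (rule summable_mult)
    moreover have eq2: "norm (norm (h n) * r ^ n * (1 - r) powr (-(A + real n))) =
        (1 - r) powr (-A) * norm (h n * of_real (r / (1 - r)) ^ n)" for n
    proof -
      have "norm (h n) * r ^ n * (1 - r) powr (-(A + real n)) \<ge> 0" using r by auto
      hence "norm (norm (h n) * r ^ n * (1 - r) powr (-(A + real n))) = norm (h n) * r ^ n * (1 - r) powr (-(A + real n))"
        by simp
      thus ?thesis using eq[of n] by simp
    qed
    ultimately have "summable (\<lambda>n. norm (norm (h n) * r ^ n * (1 - r) powr (-(A + real n))))"
      by (simp only: eq2)
    thus ?thesis by (rule norm_summable_imp_summable_on)
  qed
  have Vsum: "V summable_on (UNIV \<times> UNIV)"
    by (rule summable_on_SigmaI[OF rowV gsum]) (use r A in \<open>auto simp: V_def intro!: mult_nonneg_nonneg divide_nonneg_nonneg poch_nonneg_real\<close>)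
  have Uabs: "(\<lambda>p. norm (U p)) summable_on (UNIV \<times> UNIV)"
    by (rule Infinite_Sum.abs_summable_on_comparison_test'[OF Vsum]) (use bound in auto)
  have Usum: "U summable_on (UNIV \<times> UNIV)" by (rule abs_summable_summable[OF Uabs])
  define S where "S = infsum U (UNIV \<times> UNIV)"
  have Uhas: "(U has_sum S) (UNIV \<times> UNIV)" unfolding S_def by (rule has_sum_infsum[OF Usum])
  have rowU: "((\<lambda>j. U (n, j)) has_sum ((1 - x) powr (-a) * (h n * w ^ n))) UNIV" for n
  proof -
    have "norm (-x) < 1" using r by (simp add: r_def)
    from gen_binomial_complex[OF this, of "-a - of_nat n"]
    have s1: "(\<lambda>j. ((-a - of_nat n) gchoose j) * (-x) ^ j) sums (1 - x) powr (-a - of_nat n)" by simp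
    have "summable (\<lambda>j. norm (U (n, j)))"
    proof (rule summable_comparison_test[OF _ has_sum_imp_sums[OF rowV[of n], THEN sums_summable]])
      show "\<exists>N. \<forall>j\<ge>N. norm (norm (U (n, j))) \<le> V (n, j)" using bound by auto
    qed
    moreover have "(\<lambda>j. U (n, j)) sums (h n * (-1) ^ n * x ^ n * (1 - x) powr (-a - of_nat n))"
      using sums_mult[OF s1, of "h n * (-1) ^ n * x ^ n"] by (simp add: U_def mult_ac)
    ultimately have "((\<lambda>j. U (n, j)) has_sum (h n * (-1) ^ n * x ^ n * (1 - x) powr (-a - of_nat n))) UNIV"
      by (rule norm_summable_imp_has_sum)
    moreover have "h n * (-1) ^ n * x ^ n * (1 - x) powr (-a - of_nat n) = (1 - x) powr (-a) * (h n * w ^ n)"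
    proof -
      have "(1 - x) powr (-a - of_nat n) = (1 - x) powr (-a) / (1 - x) powr (of_nat n)"
        by (rule powr_diff)
      also have "(1 - x) powr (of_nat n) = (1 - x) ^ n" using x1 by (simp add: powr_nat')
      finally have p: "(1 - x) powr (-a - of_nat n) = (1 - x) powr (-a) / (1 - x) ^ n" .
      have "w = (-x) / (1 - x)" unfolding w_def using x1 by (simp add: field_simps)
      hence "w ^ n = (-x) ^ n / (1 - x) ^ n" by (simp only: power_divide)
      hence "w ^ n = (-1) ^ n * x ^ n / (1 - x) ^ n" by (simp add: power_minus[of x])
      thus ?thesis unfolding p using x1 by (simp add: field_simps)
    qed
    ultimately show ?thesis by simp
  qed
  have rows: "((\<lambda>n. (1 - x) powr (-a) * (h n * w ^ n)) has_sum S) UNIV"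
    by (rule has_sum_SigmaD[OF Uhas rowU])
  have "(\<lambda>n. (1 - x) powr (-a) * (h n * w ^ n)) sums ((1 - x) powr (-a) * eval_fps (F2 a (c - b) c) w)"
    using sums_mult[OF eval_F2_sums[OF nw1, of a "c - b" c]] by (simp add: h_def)
  hence S1: "S = (1 - x) powr (-a) * eval_fps (F2 a (c - b) c) w"
    using has_sum_imp_sums[OF rows] sums_unique2 by blast
  define \<phi> where "\<phi> = (\<lambda>(N::nat, n::nat). (n, N - n))"
  have bij: "bij_betw \<phi> (SIGMA N:UNIV. {..N}) (UNIV \<times> UNIV)"
    by (rule bij_betwI[where g = "\<lambda>(n, j). (n + j, n)"]) (auto simp: \<phi>_def)
  have "((\<lambda>p. U (\<phi> p)) has_sum S) (SIGMA N:UNIV. {..N})"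
    using has_sum_reindex_bij_betw[OF bij, of U S] Uhas by simp
  moreover have "((\<lambda>n. U (\<phi> (N, n))) has_sum (\<Sum>n\<le>N. U (n, N - n))) {..N}" for N
    by (rule has_sum_finiteI) (auto simp: \<phi>_def)
  ultimately have "((\<lambda>N. \<Sum>n\<le>N. U (n, N - n)) has_sum S) UNIV"
    by (rule has_sum_SigmaD)
  hence diag: "(\<lambda>N. \<Sum>n\<le>N. U (n, N - n)) sums S" by (rule has_sum_imp_sums)
  have "(\<lambda>N. \<Sum>n\<le>N. U (n, N - n)) = (\<lambda>N. f2 a b c N * x ^ N)"
    by (rule ext) (simp add: U_def h_def diag_identity[OF c])
  with diag have "(\<lambda>N. f2 a b c N * x ^ N) sums S" by simp
  moreover have "(\<lambda>N. f2 a b c N * x ^ N) sums eval_fps (F2 a b c) x"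
    using x by (intro eval_F2_sums) auto
  ultimately have "eval_fps (F2 a b c) x = S" using sums_unique2 by blast
  thus ?thesis by (simp add: S1 w_def)
qed

lemma one_minus_not_nonpos:
  assumes "x \<in> cut_plane" shows "1 - x \<notin> \<real>\<^sub>\<le>\<^sub>0"
proof
  assume "1 - x \<in> \<real>\<^sub>\<le>\<^sub>0"
  then obtain t where t: "t \<le> 0" "1 - x = of_real t" by (auto simp: nonpos_Reals_def)
  hence "Im x = 0" "Re x = 1 - t" by (auto simp: complex_eq_iff)
  thus False using assms t by (auto simp: mem_cut_plane)
qed

lemma moebius_cut_plane:
  assumes x: "x \<in> cut_plane" shows "x / (x - 1) \<in> cut_plane"
proof (rule ccontr)
  assume "x / (x - 1) \<notin> cut_plane"
  then have im: "Im (x / (x - 1)) = 0" and re: "Re (x / (x - 1)) \<ge> 1" by (auto simp: mem_cut_plane)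
  define t where "t = Re (x / (x - 1))"
  have y: "x / (x - 1) = of_real t" using im by (simp add: t_def complex_eq_iff)
  have x1: "x \<noteq> 1" using x by (auto simp: mem_cut_plane)
  hence "x = of_real t * (x - 1)" using y by (simp add: field_simps)
  hence e: "x * (of_real t - 1) = of_real t" by (simp add: algebra_simps)
  have "t \<noteq> 1"
  proof
    assume "t = 1" thus False using e by simp
  qed
  hence t1: "t > 1" using re by (simp add: t_def)
  have "of_real t - 1 = (of_real (t - 1) :: complex)" by simp
  hence "of_real t - 1 \<noteq> (0::complex)" using t1 by (simp only: of_real_eq_0_iff)
  hence "x = of_real (t / (t - 1))" using e by (simp add: field_simps)
  moreover have "t / (t - 1) \<ge> 1" using t1 by (simp add: field_simps)
  ultimately show False using x by (simp add: mem_cut_plane)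
qed

lemma moebius_small: "norm (z::complex) < 1/2 \<Longrightarrow> norm (z / (z - 1)) < 1"
proof -
  assume z: "norm z < 1/2"
  have "1 = norm ((1 - z) + z)" by simp
  also have "\<dots> \<le> norm (1 - z) + norm z" by (rule norm_triangle_ineq)
  finally have "norm (z - 1) > norm z" using z by (simp add: norm_minus_commute)
  moreover have "norm (z - 1) > 0" using calculation by (meson norm_ge_zero le_less_trans)
  ultimately show ?thesis by (simp add: norm_divide divide_less_eq)
qed

lemma pfaff_rhs_holo:
  assumes "H holomorphic_on cut_plane"
  shows "(\<lambda>x. (1 - x) powr (-a) * H (x / (x - 1))) holomorphic_on cut_plane"
proof -
  have "(\<lambda>x. (1 - x) powr (-a)) holomorphic_on cut_plane"
    by (intro holomorphic_on_powr holomorphic_intros) (use one_minus_not_nonpos in auto)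
  moreover have "(H \<circ> (\<lambda>x. x / (x - 1))) holomorphic_on cut_plane"
  proof (rule holomorphic_on_compose_gen[OF _ assms])
    show "(\<lambda>x. x / (x - 1)) holomorphic_on cut_plane"
      by (intro holomorphic_intros) (auto simp: mem_cut_plane)
    show "(\<lambda>x. x / (x - 1)) ` cut_plane \<subseteq> cut_plane" using moebius_cut_plane by auto
  qed
  ultimately show ?thesis by (intro holomorphic_on_mult) (auto simp: o_def)
qed

lemma pfaff_cut:
  assumes c: "\<forall>n::nat. c \<noteq> - of_nat n" and G: "Cont [a, b] [c] G" and H: "Cont [a, c - b] [c] H"
    and x: "x \<in> cut_plane"
  shows "G x = (1 - x) powr (-a) * H (x / (x - 1))"
proof (rule analytic_continuation_open[of "ball 0 (1/2)" cut_plane G "\<lambda>x. (1 - x) powr (-a) * H (x / (x - 1))"])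
  show "ball 0 (1/2) \<subseteq> cut_plane" using ball_subset_cut_plane by auto
  show "G holomorphic_on cut_plane" using G by (simp add: Cont_def)
  show "(\<lambda>x. (1 - x) powr (-a) * H (x / (x - 1))) holomorphic_on cut_plane"
    using H by (intro pfaff_rhs_holo) (simp add: Cont_def)
  fix z :: complex assume "z \<in> ball 0 (1/2)"
  hence z: "norm z < 1/2" by simp
  have "G z = eval_fps (F2 a b c) z" using G z by (simp add: Cont_def hyp_series_2)
  also have "\<dots> = (1 - z) powr (-a) * eval_fps (F2 a (c - b) c) (z / (z - 1))"
    by (rule pfaff_small[OF z c])
  also have "eval_fps (F2 a (c - b) c) (z / (z - 1)) = H (z / (z - 1))"
    using H moebius_small[OF z] by (simp add: Cont_def hyp_series_2)
  finally show "G z = (1 - z) powr (-a) * H (z / (z - 1))" .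
qed (use x open_cut_plane connected_cut_plane in auto)

lemma stirling_poch:
  fixes y :: complex
  shows "(-y) ^ j = (\<Sum>k\<le>j. of_nat (Stirling j k) * ((-1) ^ k * pochhammer y k))"
proof (induction j)
  case 0 thus ?case by simp
next
  case (Suc j)
  define g where "g = (\<lambda>k. (-1) ^ k * pochhammer y k :: complex)"
  have gstep: "(-y) * g k = g (Suc k) + of_nat k * g k" for k
    unfolding g_def by (simp add: pochhammer_rec' algebra_simps)
  have "(-y) ^ Suc j = (-y) * (\<Sum>k\<le>j. of_nat (Stirling j k) * g k)"
    using Suc by (simp add: g_def)
  also have "\<dots> = (\<Sum>k\<le>j. of_nat (Stirling j k) * ((-y) * g k))"
    by (simp add: sum_distrib_left mult_ac)
  also have "\<dots> = (\<Sum>k\<le>j. of_nat (Stirling j k) * g (Suc k) + of_nat k * of_nat (Stirling j k) * g k)"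
    by (simp only: gstep) (simp add: algebra_simps)
  also have "\<dots> = (\<Sum>k\<le>j. of_nat (Stirling j k) * g (Suc k)) + (\<Sum>k\<le>j. of_nat k * of_nat (Stirling j k) * g k)"
    by (rule sum.distrib)
  also have "(\<Sum>k\<le>j. of_nat k * of_nat (Stirling j k) * g k) = (\<Sum>k\<le>j. of_nat (Suc k) * of_nat (Stirling j (Suc k)) * g (Suc k))"
  proof -
    have "(\<Sum>k\<le>Suc j. of_nat k * of_nat (Stirling j k) * g k) = (\<Sum>k\<le>j. of_nat (Suc k) * of_nat (Stirling j (Suc k)) * g (Suc k))"
      by (subst sum.atMost_Suc_shift) simp
    moreover have "(\<Sum>k\<le>Suc j. of_nat k * of_nat (Stirling j k) * g k) = (\<Sum>k\<le>j. of_nat k * of_nat (Stirling j k) * g k)"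
      by simp
    ultimately show ?thesis by simp
  qed
  also have "(\<Sum>k\<le>j. of_nat (Stirling j k) * g (Suc k)) + (\<Sum>k\<le>j. of_nat (Suc k) * of_nat (Stirling j (Suc k)) * g (Suc k))
      = (\<Sum>k\<le>j. of_nat (Stirling (Suc j) (Suc k)) * g (Suc k))"
    by (simp add: sum.distrib[symmetric] algebra_simps)
  also have "\<dots> = (\<Sum>k\<le>Suc j. of_nat (Stirling (Suc j) k) * g k)"
    by (simp only: sum.atMost_Suc_shift[of _ j]) simp
  finally show ?case by (simp add: g_def)
qed

lemma degree_poch_poly: "degree (poch_poly u k) \<le> k"
proof -
  have "degree (poch_poly u k) \<le> (\<Sum>l<k. degree [:u + of_nat l, -1:])"
    unfolding poch_poly_def using degree_prod_sum_le[of "{..<k}" "\<lambda>l. [:u + of_nat l, -1:]"] by (simp add: o_def)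
  also have "\<dots> \<le> (\<Sum>l<k. 1)" by (intro sum_mono) simp
  finally show ?thesis by simp
qed

lemma poly_poch_poly: "poly (poch_poly u k) t = pochhammer (u - t) k"
  by (simp add: poch_poly_def poly_prod pochhammer_prod atLeast0LessThan algebra_simps)

definition Qpoly :: "complex list \<Rightarrow> nat list \<Rightarrow> complex \<Rightarrow> complex poly" where
  "Qpoly fs ms b = (\<Prod>i<length fs. poch_poly (fs ! i - b) (ms ! i))"

lemma degree_Qpoly:
  assumes "length ms = length fs"
  shows "degree (Qpoly fs ms b) \<le> sum_list ms"
proof -
  have "degree (Qpoly fs ms b) \<le> (\<Sum>i<length fs. degree (poch_poly (fs ! i - b) (ms ! i)))"
    unfolding Qpoly_def using degree_prod_sum_le[of "{..<length fs}"] by (simp add: o_def)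
  also have "\<dots> \<le> (\<Sum>i<length fs. ms ! i)" by (intro sum_mono degree_poch_poly)
  also have "\<dots> = sum_list ms" using assms by (simp add: sum_list_sum_nth atLeast0LessThan)
  finally show ?thesis .
qed

lemma KI:
  assumes "length ms = length fs"
  shows "poly (Qpoly fs ms b) (-y) = (\<Sum>k\<le>sum_list ms. D_coef fs ms b k * ((-1) ^ k * pochhammer y k))"
proof -
  define m where "m = sum_list ms"
  define Q where "Q = Qpoly fs ms b"
  have dQ: "degree Q \<le> m" unfolding Q_def m_def by (rule degree_Qpoly[OF assms])
  have "poly Q (-y) = (\<Sum>j\<le>m. coeff Q j * (-y) ^ j)"
    using dQ by (simp add: poly_altdef sum.mono_neutral_left[of "{..m}" "{..degree Q}"] coeff_eq_0)
  also have "\<dots> = (\<Sum>j\<le>m. \<Sum>k\<le>m. coeff Q j * (of_nat (Stirling j k) * ((-1) ^ k * pochhammer y k)))"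
  proof (intro sum.cong refl)
    fix j assume j: "j \<in> {..m}"
    have "(-y) ^ j = (\<Sum>k\<le>j. of_nat (Stirling j k) * ((-1) ^ k * pochhammer y k))" by (rule stirling_poch)
    also have "\<dots> = (\<Sum>k\<le>m. of_nat (Stirling j k) * ((-1) ^ k * pochhammer y k))"
      using j by (intro sum.mono_neutral_left) auto
    finally show "coeff Q j * (-y) ^ j = (\<Sum>k\<le>m. coeff Q j * (of_nat (Stirling j k) * ((-1) ^ k * pochhammer y k)))"
      by (simp add: sum_distrib_left)
  qed
  also have "\<dots> = (\<Sum>k\<le>m. \<Sum>j\<le>m. coeff Q j * (of_nat (Stirling j k) * ((-1) ^ k * pochhammer y k)))"
    by (rule sum.swap)
  also have "\<dots> = (\<Sum>k\<le>m. D_coef fs ms b k * ((-1) ^ k * pochhammer y k))"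
  proof (intro sum.cong refl)
    fix k assume k: "k \<in> {..m}"
    have "(\<Sum>j\<le>m. coeff Q j * (of_nat (Stirling j k) * ((-1) ^ k * pochhammer y k)))
        = (\<Sum>j=k..m. coeff Q j * (of_nat (Stirling j k) * ((-1) ^ k * pochhammer y k)))"
      by (rule sum.mono_neutral_right) auto
    also have "\<dots> = (\<Sum>j=k..m. coeff Q j * of_nat (Stirling j k)) * ((-1) ^ k * pochhammer y k)"
      by (simp only: sum_distrib_right) (simp add: mult_ac)
    finally have "(\<Sum>j\<le>m. coeff Q j * (of_nat (Stirling j k) * ((-1) ^ k * pochhammer y k)))
        = (\<Sum>j=k..m. coeff Q j * of_nat (Stirling j k)) * ((-1) ^ k * pochhammer y k)" .
    thus "(\<Sum>j\<le>m. coeff Q j * (of_nat (Stirling j k) * ((-1) ^ k * pochhammer y k)))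
        = D_coef fs ms b k * ((-1) ^ k * pochhammer y k)"
      by (simp add: D_coef_def alpha_coef_def Q_def Qpoly_def m_def)
  qed
  finally show ?thesis by (simp add: Q_def m_def)
qed

lemma poly_Qpoly: "poly (Qpoly fs ms b) t = (\<Prod>i<length fs. pochhammer (fs ! i - b - t) (ms ! i))"
  by (simp add: Qpoly_def poly_prod poly_poch_poly)

lemma poch_split:
  fixes b c :: complex assumes k: "k \<le> m"
  shows "pochhammer (c - b - of_nat m) m = pochhammer (c - b - of_nat m) (m - k) * ((-1) ^ k * pochhammer (1 - c + b) k)"
proof -
  have "pochhammer (c - b - of_nat m) m = pochhammer (c - b - of_nat m) (m - k) * pochhammer (c - b - of_nat m + of_nat (m - k)) (m - (m - k))"
    by (rule pochhammer_product) simp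
  also have "m - (m - k) = k" using k by simp
  also have "c - b - of_nat m + of_nat (m - k) = - (b - c + of_nat k)" using k by (simp add: of_nat_diff)
  also have "pochhammer (- (b - c + of_nat k)) k = (-1) ^ k * pochhammer (1 - c + b) k"
    by (subst pochhammer_minus) (simp add: algebra_simps)
  finally show ?thesis .
qed

lemma poly_P:
  "poly (P_poly fs ms b c) t = (\<Sum>k\<le>sum_list ms. pochhammer b k * pochhammer (1 - c + b) k * D_coef fs ms b k *
      pochhammer (c - b - of_nat (sum_list ms) - t) (sum_list ms - k)) / pochhammer (c - b - of_nat (sum_list ms)) (sum_list ms)"
  by (simp add: P_poly_def Let_def poly_sum poly_poch_poly atLeast0AtMost)

definition FM :: "complex list \<Rightarrow> nat list \<Rightarrow> complex" where
  "FM fs ms = (\<Prod>i<length fs. pochhammer (fs ! i) (ms ! i))"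

lemma sign_poch:
  fixes b c :: complex assumes k: "k \<le> m"
  shows "pochhammer (1 - c + b) k * pochhammer (c - b - of_nat m) (m - k) = (-1) ^ k * pochhammer (c - b - of_nat m) m"
proof -
  have s: "(-1::complex) ^ k * (-1) ^ k = 1" by (simp add: power_mult_distrib[symmetric])
  show ?thesis unfolding poch_split[OF k, of c b] using s
    by (simp add: mult_ac)
qed

lemma P0:
  assumes len: "length ms = length fs" and u: "pochhammer (c - b - of_nat (sum_list ms)) (sum_list ms) \<noteq> 0"
  shows "poly (P_poly fs ms b c) 0 = FM fs ms"
proof -
  define m where "m = sum_list ms"
  define u where "u = c - b - of_nat m"
  have "poly (P_poly fs ms b c) 0 = (\<Sum>k\<le>m. pochhammer b k * D_coef fs ms b k * (pochhammer (1 - c + b) k * pochhammer u (m - k))) / pochhammer u m"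
    unfolding poly_P by (simp add: m_def u_def mult_ac)
  also have "\<dots> = (\<Sum>k\<le>m. pochhammer b k * D_coef fs ms b k * ((-1) ^ k * pochhammer u m)) / pochhammer u m"
    by (intro arg_cong2[where f = "(/)"] sum.cong refl) (simp add: sign_poch u_def)
  also have "\<dots> = (\<Sum>k\<le>m. D_coef fs ms b k * ((-1) ^ k * pochhammer b k))"
    using u by (simp add: sum_divide_distrib m_def u_def mult_ac)
  also have "\<dots> = poly (Qpoly fs ms b) (-b)" using KI[OF len, of b b] by (simp add: m_def)
  also have "\<dots> = FM fs ms" by (simp add: poly_Qpoly FM_def)
  finally show ?thesis .
qed

lemma PN:
  assumes len: "length ms = length fs" and u: "pochhammer (c - b - of_nat (sum_list ms)) (sum_list ms) \<noteq> 0"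
  shows "pochhammer (c - b - of_nat (sum_list ms)) n * poly (P_poly fs ms b c) (- of_nat n) =
    (\<Sum>k\<le>sum_list ms. D_coef fs ms b k * (-1) ^ k * pochhammer b k * pochhammer (c - (b + of_nat k)) n)"
proof -
  define m where "m = sum_list ms"
  define u where "u = c - b - of_nat m"
  have "pochhammer u n * poly (P_poly fs ms b c) (- of_nat n) =
     (\<Sum>k\<le>m. pochhammer b k * D_coef fs ms b k * (pochhammer (1 - c + b) k * (pochhammer u n * pochhammer (u + of_nat n) (m - k)))) / pochhammer u m"
    unfolding poly_P by (simp add: m_def u_def sum_distrib_left mult_ac)
  also have "\<dots> = (\<Sum>k\<le>m. pochhammer b k * D_coef fs ms b k * ((pochhammer (1 - c + b) k * pochhammer u (m - k)) * pochhammer (c - (b + of_nat k)) n)) / pochhammer u m"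
  proof (intro arg_cong2[where f = "(/)"] sum.cong refl)
    fix k assume "k \<in> {..m}"
    hence k: "k \<le> m" by simp
    have "pochhammer u n * pochhammer (u + of_nat n) (m - k) = pochhammer u (n + (m - k))"
      by (simp add: pochhammer_product')
    also have "\<dots> = pochhammer u ((m - k) + n)" by (simp add: add.commute)
    also have "\<dots> = pochhammer u (m - k) * pochhammer (u + of_nat (m - k)) n" by (simp add: pochhammer_product')
    also have "u + of_nat (m - k) = c - (b + of_nat k)" using k by (simp add: u_def of_nat_diff)
    finally show "pochhammer b k * D_coef fs ms b k * (pochhammer (1 - c + b) k * (pochhammer u n * pochhammer (u + of_nat n) (m - k))) =
       pochhammer b k * D_coef fs ms b k * ((pochhammer (1 - c + b) k * pochhammer u (m - k)) * pochhammer (c - (b + of_nat k)) n)"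
      by (simp add: mult_ac)
  qed
  also have "\<dots> = (\<Sum>k\<le>m. pochhammer b k * D_coef fs ms b k * (((-1) ^ k * pochhammer u m) * pochhammer (c - (b + of_nat k)) n)) / pochhammer u m"
    by (intro arg_cong2[where f = "(/)"] sum.cong refl) (simp add: sign_poch u_def)
  also have "\<dots> = (\<Sum>k\<le>m. D_coef fs ms b k * (-1) ^ k * pochhammer b k * pochhammer (c - (b + of_nat k)) n)"
    using u by (simp add: sum_divide_distrib m_def u_def mult_ac)
  finally show ?thesis by (simp add: m_def u_def)
qed


lemma prod_list_map_mult: "(\<Prod>x\<leftarrow>xs. f x * g x) = (\<Prod>x\<leftarrow>xs. f x) * (\<Prod>x\<leftarrow>xs. (g x :: complex))"
  by (induct xs) (simp_all add: mult_ac)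

lemma prod_list_map2_nth:
  assumes "length ms = length fs"
  shows "(\<Prod>x\<leftarrow>map2 h fs ms. g x) = (\<Prod>i<length fs. g (h (fs ! i) (ms ! i)) :: complex)"
  using assms by (simp add: prod.list_conv_set_nth atLeast0LessThan)

lemma prod_list_map_nth: "(\<Prod>x\<leftarrow>fs. g x) = (\<Prod>i<length fs. g (fs ! i) :: complex)"
  by (simp add: prod.list_conv_set_nth atLeast0LessThan)

lemma CL:
  assumes len: "length ms = length fs" and fnz: "\<forall>f\<in>set fs. \<forall>n::nat. f \<noteq> - of_nat n"
  shows "hyp_coeff (a # b # map2 (\<lambda>f k. f + of_nat k) fs ms) (c # fs) n =
    (\<Sum>k\<le>sum_list ms. (D_coef fs ms b k * (-1) ^ k * pochhammer b k / FM fs ms) * f2 a (b + of_nat k) c n)"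
proof -
  define r where "r = length fs"
  define PL where "PL = (\<Prod>i<r. pochhammer (fs ! i + of_nat (ms ! i)) n)"
  define PF where "PF = (\<Prod>i<r. pochhammer (fs ! i) n)"
  define PN where "PN = (\<Prod>i<r. pochhammer (fs ! i + of_nat n) (ms ! i))"
  have fi: "\<forall>k::nat. fs ! i \<noteq> - of_nat k" if "i < r" for i
    using fnz that by (auto simp: r_def)
  have PFnz: "PF \<noteq> 0" unfolding PF_def using fi poch_nz by auto
  have FMnz: "FM fs ms \<noteq> 0" unfolding FM_def r_def[symmetric] using fi poch_nz by auto
  have lhs: "hyp_coeff (a # b # map2 (\<lambda>f k. f + of_nat k) fs ms) (c # fs) n =
      pochhammer a n * pochhammer b n * PL / (pochhammer c n * PF * fact n)"
    unfolding hyp_coeff_def using len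
    by (simp add: prod_list_map2_nth prod_list_map_nth PL_def PF_def r_def mult_ac)
  have key: "PL * FM fs ms = PN * PF"
  proof -
    have "PL * FM fs ms = (\<Prod>i<r. pochhammer (fs ! i) (ms ! i) * pochhammer (fs ! i + of_nat (ms ! i)) n)"
      by (simp add: PL_def FM_def r_def prod.distrib mult_ac)
    also have "\<dots> = (\<Prod>i<r. pochhammer (fs ! i) n * pochhammer (fs ! i + of_nat n) (ms ! i))"
    proof (intro prod.cong refl)
      fix i
      have "pochhammer (fs ! i) (ms ! i) * pochhammer (fs ! i + of_nat (ms ! i)) n = pochhammer (fs ! i) (ms ! i + n)"
        by (simp add: pochhammer_product')
      also have "\<dots> = pochhammer (fs ! i) (n + ms ! i)" by (simp add: add.commute)
      also have "\<dots> = pochhammer (fs ! i) n * pochhammer (fs ! i + of_nat n) (ms ! i)"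
        by (simp add: pochhammer_product')
      finally show "pochhammer (fs ! i) (ms ! i) * pochhammer (fs ! i + of_nat (ms ! i)) n =
          pochhammer (fs ! i) n * pochhammer (fs ! i + of_nat n) (ms ! i)" .
    qed
    also have "\<dots> = PN * PF" by (simp add: PN_def PF_def prod.distrib mult_ac)
    finally show ?thesis .
  qed
  have "(\<Sum>k\<le>sum_list ms. (D_coef fs ms b k * (-1) ^ k * pochhammer b k / FM fs ms) * f2 a (b + of_nat k) c n)
      = (\<Sum>k\<le>sum_list ms. D_coef fs ms b k * (-1) ^ k * (pochhammer b k * pochhammer (b + of_nat k) n))
        * (pochhammer a n / (FM fs ms * pochhammer c n * fact n))"
    by (simp add: sum_distrib_right sum_distrib_left sum_divide_distrib f2_def mult_ac)
  also have "(\<Sum>k\<le>sum_list ms. D_coef fs ms b k * (-1) ^ k * (pochhammer b k * pochhammer (b + of_nat k) n))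
      = pochhammer b n * (\<Sum>k\<le>sum_list ms. D_coef fs ms b k * ((-1) ^ k * pochhammer (b + of_nat n) k))"
  proof -
    have "pochhammer b k * pochhammer (b + of_nat k) n = pochhammer b n * pochhammer (b + of_nat n) k" for k
    proof -
      have "pochhammer b k * pochhammer (b + of_nat k) n = pochhammer b (k + n)" by (simp add: pochhammer_product')
      also have "\<dots> = pochhammer b (n + k)" by (simp add: add.commute)
      also have "\<dots> = pochhammer b n * pochhammer (b + of_nat n) k" by (simp add: pochhammer_product')
      finally show ?thesis .
    qed
    thus ?thesis by (simp add: sum_distrib_left mult_ac)
  qed
  also have "(\<Sum>k\<le>sum_list ms. D_coef fs ms b k * ((-1) ^ k * pochhammer (b + of_nat n) k)) = PN"
    using KI[OF len, of b "b + of_nat n"] by (simp add: poly_Qpoly PN_def r_def)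
  finally have rhs: "(\<Sum>k\<le>sum_list ms. (D_coef fs ms b k * (-1) ^ k * pochhammer b k / FM fs ms) * f2 a (b + of_nat k) c n)
      = pochhammer b n * PN * (pochhammer a n / (FM fs ms * pochhammer c n * fact n))" .
  have "PL / PF = PN / FM fs ms" using key PFnz FMnz by (simp add: field_simps)
  hence "pochhammer a n * pochhammer b n * PL / (pochhammer c n * PF * fact n) =
      pochhammer b n * PN * (pochhammer a n / (FM fs ms * pochhammer c n * fact n))"
  proof -
    assume e: "PL / PF = PN / FM fs ms"
    have "pochhammer a n * pochhammer b n * PL / (pochhammer c n * PF * fact n) =
        pochhammer a n * pochhammer b n * (PL / PF) / (pochhammer c n * fact n)" by (simp add: mult_ac)
    also have "\<dots> = pochhammer a n * pochhammer b n * (PN / FM fs ms) / (pochhammer c n * fact n)" by (simp only: e)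
    also have "\<dots> = pochhammer b n * PN * (pochhammer a n / (FM fs ms * pochhammer c n * fact n))" by (simp add: mult_ac)
    finally show ?thesis .
  qed
  thus ?thesis using lhs rhs by simp
qed

lemma prod_shift_ratio:
  assumes "\<forall>z\<in>set zs. z \<noteq> (0::complex)"
  shows "(\<Prod>z\<leftarrow>zs. pochhammer (z + 1) n) = (\<Prod>z\<leftarrow>zs. pochhammer z n) * (\<Prod>z\<leftarrow>zs. (z + of_nat n) / z)"
proof -
  have "(\<Prod>z\<leftarrow>zs. pochhammer (z + 1) n) = (\<Prod>z\<leftarrow>zs. pochhammer z n * ((z + of_nat n) / z))"
  proof (intro arg_cong[where f = prod_list] map_cong refl)
    fix z assume "z \<in> set zs"
    hence z: "z \<noteq> 0" using assms by auto
    have "z * pochhammer (z + 1) n = pochhammer z (Suc n)" by (simp add: pochhammer_rec)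
    also have "\<dots> = (z + of_nat n) * pochhammer z n" by (simp add: pochhammer_rec')
    finally show "pochhammer (z + 1) n = pochhammer z n * ((z + of_nat n) / z)" using z
      by (simp add: field_simps)
  qed
  also have "\<dots> = (\<Prod>z\<leftarrow>zs. pochhammer z n) * (\<Prod>z\<leftarrow>zs. (z + of_nat n) / z)"
    by (rule prod_list_map_mult)
  finally show ?thesis .
qed

lemma prod_neg_ratio:
  assumes "\<forall>z\<in>set zs. z \<noteq> (0::complex)"
  shows "(\<Prod>z\<leftarrow>zs. - t - z) = (\<Prod>z\<leftarrow>zs. - z) * (\<Prod>z\<leftarrow>zs. (z + t) / z)"
proof -
  have "(\<Prod>z\<leftarrow>zs. - t - z) = (\<Prod>z\<leftarrow>zs. (- z) * ((z + t) / z))"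
  proof (intro arg_cong[where f = prod_list] map_cong refl)
    fix z assume "z \<in> set zs"
    hence z: "z \<noteq> 0" using assms by auto
    thus "- t - z = (- z) * ((z + t) / z)" by (simp add: field_simps)
  qed
  also have "\<dots> = (\<Prod>z\<leftarrow>zs. - z) * (\<Prod>z\<leftarrow>zs. (z + t) / z)"
    by (rule prod_list_map_mult)
  finally show ?thesis .
qed


lemma poly_prod_lin: "poly (\<Prod>z\<leftarrow>zs. [:-z, 1:]) t = (\<Prod>z\<leftarrow>zs. t - (z::complex))"
  by (induct zs) (simp_all add: algebra_simps)

lemma CR:
  assumes len: "length ms = length fs" and fnz: "\<forall>f\<in>set fs. \<forall>n::nat. f \<noteq> - of_nat n"
    and u: "pochhammer (c - b - of_nat (sum_list ms)) (sum_list ms) \<noteq> 0"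
    and Pfac: "P_poly fs ms b c = smult (lead_coeff (P_poly fs ms b c)) (\<Prod>z\<leftarrow>\<zeta>. [:-z, 1:])"
    and znz: "\<forall>z\<in>set \<zeta>. \<forall>n::nat. z \<noteq> - of_nat n"
  shows "hyp_coeff (a # (c - b - of_nat (sum_list ms)) # map (\<lambda>z. z + 1) \<zeta>) (c # \<zeta>) n =
    (\<Sum>k\<le>sum_list ms. (D_coef fs ms b k * (-1) ^ k * pochhammer b k / FM fs ms) * f2 a (c - (b + of_nat k)) c n)"
proof -
  define m where "m = sum_list ms"
  define u where "u = c - b - of_nat m"
  define L where "L = lead_coeff (P_poly fs ms b c)"
  have z0: "\<forall>z\<in>set \<zeta>. z \<noteq> 0"
  proof
    fix z assume "z \<in> set \<zeta>"
    from znz[rule_format, OF this, of 0] show "z \<noteq> 0" by simp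
  qed
  have FMnz: "FM fs ms \<noteq> 0"
    unfolding FM_def using fnz poch_nz by (auto simp: prod_zero_iff)
  have polyP: "poly (P_poly fs ms b c) t = L * (\<Prod>z\<leftarrow>\<zeta>. t - z)" for t
    by (subst Pfac) (simp add: L_def poly_prod_lin)
  have P0': "L * (\<Prod>z\<leftarrow>\<zeta>. - z) = FM fs ms"
    using P0[OF len u] polyP[of 0] by simp
  have PNn: "poly (P_poly fs ms b c) (- of_nat n) = FM fs ms * (\<Prod>z\<leftarrow>\<zeta>. (z + of_nat n) / z)"
    unfolding polyP prod_neg_ratio[OF z0, of "of_nat n"] P0'[symmetric] by (simp add: mult_ac)
  have PZ: "(\<Prod>z\<leftarrow>\<zeta>. pochhammer z n) \<noteq> 0"
    using znz poch_nz by (auto simp: prod_list_zero_iff)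
  have lhs: "hyp_coeff (a # u # map (\<lambda>z. z + 1) \<zeta>) (c # \<zeta>) n =
      pochhammer a n * pochhammer u n * (\<Prod>z\<leftarrow>\<zeta>. (z + of_nat n) / z) / (pochhammer c n * fact n)"
    unfolding hyp_coeff_def using PZ by (simp add: o_def prod_shift_ratio[OF z0] field_simps)
  have "(\<Sum>k\<le>m. (D_coef fs ms b k * (-1) ^ k * pochhammer b k / FM fs ms) * f2 a (c - (b + of_nat k)) c n)
      = (\<Sum>k\<le>m. D_coef fs ms b k * (-1) ^ k * pochhammer b k * pochhammer (c - (b + of_nat k)) n)
         * (pochhammer a n / (FM fs ms * pochhammer c n * fact n))"
    by (simp add: sum_distrib_right sum_distrib_left sum_divide_distrib f2_def mult_ac)
  also have "(\<Sum>k\<le>m. D_coef fs ms b k * (-1) ^ k * pochhammer b k * pochhammer (c - (b + of_nat k)) n)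
      = pochhammer u n * poly (P_poly fs ms b c) (- of_nat n)"
    using PN[OF len u, of n] by (simp add: m_def u_def)
  finally show ?thesis
    unfolding m_def[symmetric] u_def[symmetric] lhs PNn using FMnz by (simp add: field_simps)
qed

lemma Cont_comb:
  assumes C: "\<And>k. Cont [a, \<beta> k] [c] (Gk k)"
    and co: "\<And>n. hyp_coeff as bs n = (\<Sum>k\<le>M. A k * f2 a (\<beta> k) c n)"
  shows "Cont as bs (\<lambda>x. \<Sum>k\<le>M. A k * Gk k x)"
  unfolding Cont_def
proof safe
  show "(\<lambda>x. \<Sum>k\<le>M. A k * Gk k x) holomorphic_on cut_plane"
    using C by (intro holomorphic_on_sum holomorphic_on_mult holomorphic_on_const) (auto simp: Cont_def)
next
  fix z :: complex assume z: "norm z < 1"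
  have s: "(\<lambda>n. A k * (f2 a (\<beta> k) c n * z ^ n)) sums (A k * Gk k z)" for k
  proof -
    have "Gk k z = eval_fps (F2 a (\<beta> k) c) z" using C[of k] z by (simp add: Cont_def hyp_series_2)
    thus ?thesis using sums_mult[OF eval_F2_sums[OF z], of "A k"] by simp
  qed
  have "(\<lambda>n. \<Sum>k\<le>M. A k * (f2 a (\<beta> k) c n * z ^ n)) sums (\<Sum>k\<le>M. A k * Gk k z)"
    by (rule sums_sum) (rule s)
  moreover have "(\<lambda>n. \<Sum>k\<le>M. A k * (f2 a (\<beta> k) c n * z ^ n)) = (\<lambda>n. hyp_coeff as bs n * z ^ n)"
    by (rule ext) (simp only: co sum_distrib_right mult.assoc)
  ultimately have "(\<lambda>n. hyp_coeff as bs n * z ^ n) sums (\<Sum>k\<le>M. A k * Gk k z)" by simp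
  thus "(\<Sum>k\<le>M. A k * Gk k z) = hyp_series as bs z"
    unfolding hyp_series_def by (simp add: sums_iff)
qed

theorem theorem1:
  fixes r :: nat and ms :: "nat list" and fs :: "complex list" and a b c :: complex
    and \<zeta> :: "complex list" and x :: complex
  assumes "r \<ge> 1" and "length ms = r" and "length fs = r"
    and "pochhammer (c - b - of_nat (sum_list ms)) (sum_list ms) \<noteq> 0"
    and "\<forall>n::nat. c \<noteq> - of_nat n"
    and "\<forall>f\<in>set fs. \<forall>n::nat. f \<noteq> - of_nat n"
    and "length \<zeta> = sum_list ms"
    and "P_poly fs ms b c \<noteq> 0"
    and "P_poly fs ms b c = smult (lead_coeff (P_poly fs ms b c)) (\<Prod>z\<leftarrow>\<zeta>. [:-z, 1:])"
    and "\<forall>z\<in>set \<zeta>. \<forall>n::nat. z \<noteq> - of_nat n"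
    and "x \<in> cut_plane"
  shows "hypF (a # b # map2 (\<lambda>f k. f + of_nat k) fs ms) (c # fs) x =
         (1 - x) powr (- a) *
         hypF (a # (c - b - of_nat (sum_list ms)) # map (\<lambda>z. z + 1) \<zeta>) (c # \<zeta>) (x / (x - 1))"
proof -
  note len0 = assms(2,3)
  have len: "length ms = length fs" using len0 by simp
  note u = assms(4) and c = assms(5) and fnz = assms(6) and Pfac = assms(9) and znz = assms(10)
    and x = assms(11)
  define M where "M = sum_list ms"
  define A where "A = (\<lambda>k. D_coef fs ms b k * (-1) ^ k * pochhammer b k / FM fs ms)"
  define G where "G = (\<lambda>k::nat. hypF [a, b + of_nat k] [c])"
  define H where "H = (\<lambda>k::nat. hypF [a, c - (b + of_nat k)] [c])"
  have CG: "Cont [a, b + of_nat k] [c] (G k)" for k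
  proof -
    obtain G0 where "Cont [a, b + of_nat k] [c] G0" using Cont_exists[OF c] by blast
    thus ?thesis unfolding G_def by (rule hypF_Cont)
  qed
  have CH: "Cont [a, c - (b + of_nat k)] [c] (H k)" for k
  proof -
    obtain H0 where "Cont [a, c - (b + of_nat k)] [c] H0" using Cont_exists[OF c] by blast
    thus ?thesis unfolding H_def by (rule hypF_Cont)
  qed
  have CL': "Cont (a # b # map2 (\<lambda>f k. f + of_nat k) fs ms) (c # fs) (\<lambda>x. \<Sum>k\<le>M. A k * G k x)"
    by (rule Cont_comb[OF CG]) (simp add: CL[OF len fnz] A_def M_def)
  have CR': "Cont (a # (c - b - of_nat (sum_list ms)) # map (\<lambda>z. z + 1) \<zeta>) (c # \<zeta>) (\<lambda>x. \<Sum>k\<le>M. A k * H k x)"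
    by (rule Cont_comb[OF CH]) (simp add: CR[OF len fnz u Pfac znz] A_def M_def)
  have "hypF (a # b # map2 (\<lambda>f k. f + of_nat k) fs ms) (c # fs) x = (\<Sum>k\<le>M. A k * G k x)"
    by (rule hypF_eqI[OF CL' x])
  also have "\<dots> = (\<Sum>k\<le>M. A k * ((1 - x) powr (- a) * H k (x / (x - 1))))"
    by (intro sum.cong refl) (simp add: pfaff_cut[OF c CG CH x])
  also have "\<dots> = (1 - x) powr (- a) * (\<Sum>k\<le>M. A k * H k (x / (x - 1)))"
    by (simp add: sum_distrib_left mult_ac)
  also have "(\<Sum>k\<le>M. A k * H k (x / (x - 1))) =
      hypF (a # (c - b - of_nat (sum_list ms)) # map (\<lambda>z. z + 1) \<zeta>) (c # \<zeta>) (x / (x - 1))"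
    by (rule hypF_eqI[OF CR' moebius_cut_plane[OF x], symmetric])
  finally show ?thesis .
qed

end
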